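(* Let $R$ be a partially ordered commutative ring, $m\ge1$, $A=(a_{ij})\in R^{m\times m}$, $b\in R^m$, and let $L\in R^{(m+1)\times(m+1)}$ be the matrix with $L_{ij}=a_{ij}$ for $i,j\le m$, $L_{i,m+1}=b_i$ for $i\le m$, $L_{m+1,j}=-\sum_{k=1}^m a_{kj}$ for $j\le m$, and $L_{m+1,m+1}=-\sum_{k=1}^m b_k$. Assume $\mathcal{G}$ is a P-graph with Laplacian $L$ and associated map $\mu$. Then for $i\in\mathcal{N}=\{1,\dots,m+1\}$, $\Upsilon_\mathcal{G}(i)\neq0$ if and only if there exists a spanning tree $\tau\in\Lambda_\mathcal{G}(\{i\})$ such that $\pi(e)+\sum_{e'\in\mu(e)}\pi(e')\in R_{>0}$ for all $e\in\tau\cap\mathcal{E}^-$. In particular, $\det(A)\neq0$ if and only if this statement holds for $i=m+1$.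
   Context: $\mathcal{G}=(\mathcal{N},\mathcal{E})$ is a multidigraph with source/target maps $s,t$, no self-loops, node set $\{1,\dots,m+1\}$ and labeling $\pi\colon\mathcal{E}\to R$, extended by $\pi(\mathcal{E}')=\prod_{e\in\mathcal{E}'}\pi(e)$. Laplacian: $L_{ij}=\sum_{e:\,s(e)=j,t(e)=i}\pi(e)$ ($i\ne j$), $L_{ii}=-\sum_{k\ne i}L_{ki}$. Trees/forests: subgraphs whose underlying undirected graph is acyclic (connected for trees); a tree is rooted at $N$ if $N$ is its only node without outgoing edge; spanning means node set $\mathcal{N}$, and spanning forests are identified with their edge sets. For $B\subseteq\mathcal{N}$, $\Theta_\mathcal{G}(B)$ is the set of spanning forests with $|B|$ connected components each being a tree rooted at a node of $B$; $\Theta_\mathcal{G}(j)=\Theta_\mathcal{G}(\{j\})$ and $\Upsilon_\mathcal{G}(j)=\sum_{\tau\in\Theta_\mathcal{G}(j)}\pi(\tau)$. A cycle is a closed directed path with no repeated nodes. $\mathcal{E}^-=\{e:\pi(e)\in R_{<0}\}$, $\mathcal{E}^+=\{e:\pi(e)\in R_{>0}\}$. An edge partition $(\mathcal{G},\mu)$, $\mu\colon\mathcal{E}^-\to\mathcal{P}(\mathcal{E}^+)$, satisfies (i) $\mathcal{E}=\mathcal{E}^+\sqcup\mathcal{E}^-$; (ii) every cycle contains at most one edge of $\mathcal{E}^-$; (iii) for $e\in\mathcal{E}^-$: (a) $e'\in\mu(e)\Rightarrow s(e')=s(e)$; (b) $e'\in\mu(e)\Rightarrow$ every cycle containing $e'$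 contains $t(e)$; (c) $\mu(e)\cap\mu(e')=\emptyset$ for $e\neq e'$. $\mathcal{G}$ is a P-graph with associated map $\mu$ if $(\mathcal{G},\mu)$ is an edge partition and (iv) $\pi(e)+\sum_{e'\in\mu(e)}\pi(e')\in R_{\ge0}$ for all $e\in\mathcal{E}^-$. Let $\operatorname{im}\mu=\bigcup_{e\in\mathcal{E}^-}\mu(e)$ and $\mu^*\colon\operatorname{im}\mu\to\mathcal{E}^-$, $\mu^*(e')=e$ if $e'\in\mu(e)$. For $\zeta\in\Theta_\mathcal{G}(B)$ let $\mathcal{E}_\zeta=\{E\subseteq\zeta\cap\operatorname{im}\mu : (\zeta\setminus E)\cup\mu^*(E)\in\Theta_\mathcal{G}(B)\}$, and $\Lambda_\mathcal{G}(B)=\{\zeta\in\Theta_\mathcal{G}(B):\mathcal{E}_\zeta=\{\emptyset\}\}$. *)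

theory Defs
  imports "Jordan_Normal_Form.Determinant"
begin

definition nodes :: "nat \<Rightarrow> nat set" where
  "nodes m = {1..m+1}"

definition multidigraph :: "nat \<Rightarrow> 'e set \<Rightarrow> ('e \<Rightarrow> nat) \<Rightarrow> ('e \<Rightarrow> nat) \<Rightarrow> bool" where
  "multidigraph m E s t \<longleftrightarrow> finite E \<and>
     (\<forall>e\<in>E. s e \<in> nodes m \<and> t e \<in> nodes m \<and> s e \<noteq> t e)"

definition lap_off :: "'e set \<Rightarrow> ('e \<Rightarrow> nat) \<Rightarrow> ('e \<Rightarrow> nat) \<Rightarrow> ('e \<Rightarrow> 'r::comm_ring_1)
    \<Rightarrow> nat \<Rightarrow> nat \<Rightarrow> 'r" where
  "lap_off E s t lab i j = (\<Sum>e\<in>{e\<in>E. s e = j \<and> t e = i}. lab e)"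

definition laplacian :: "nat \<Rightarrow> 'e set \<Rightarrow> ('e \<Rightarrow> nat) \<Rightarrow> ('e \<Rightarrow> nat) \<Rightarrow> ('e \<Rightarrow> 'r::comm_ring_1)
    \<Rightarrow> nat \<Rightarrow> nat \<Rightarrow> 'r" where
  "laplacian m E s t lab i j =
     (if i \<noteq> j then lap_off E s t lab i j
      else - (\<Sum>k\<in>nodes m - {i}. lap_off E s t lab k i))"

definition undirected_cycle :: "'e set \<Rightarrow> ('e \<Rightarrow> nat) \<Rightarrow> ('e \<Rightarrow> nat) \<Rightarrow> 'e list \<Rightarrow> nat list \<Rightarrow> bool" where
  "undirected_cycle F s t es vs \<longleftrightarrow>
     es \<noteq> [] \<and> set es \<subseteq> F \<and> distinct es \<and>
     length vs = length es + 1 \<and> vs ! 0 = vs ! length es \<and> distinct (butlast vs) \<and>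
     (\<forall>i<length es. (s (es!i) = vs!i \<and> t (es!i) = vs!(i+1)) \<or>
                    (t (es!i) = vs!i \<and> s (es!i) = vs!(i+1)))"

definition undirected_acyclic :: "'e set \<Rightarrow> ('e \<Rightarrow> nat) \<Rightarrow> ('e \<Rightarrow> nat) \<Rightarrow> bool" where
  "undirected_acyclic F s t \<longleftrightarrow> (\<nexists>es vs. undirected_cycle F s t es vs)"

definition uconn :: "'e set \<Rightarrow> ('e \<Rightarrow> nat) \<Rightarrow> ('e \<Rightarrow> nat) \<Rightarrow> nat rel" where
  "uconn F s t = ({(s e, t e) | e. e \<in> F} \<union> {(t e, s e) | e. e \<in> F})\<^sup>*"

definition components :: "nat \<Rightarrow> 'e set \<Rightarrow> ('e \<Rightarrow> nat) \<Rightarrow> ('e \<Rightarrow> nat) \<Rightarrow> nat set set" where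
  "components m F s t = {{w \<in> nodes m. (v, w) \<in> uconn F s t} | v. v \<in> nodes m}"

definition rooted_at :: "'e set \<Rightarrow> ('e \<Rightarrow> nat) \<Rightarrow> nat set \<Rightarrow> nat \<Rightarrow> bool" where
  "rooted_at F s C r \<longleftrightarrow> {v \<in> C. \<not> (\<exists>e\<in>F. s e = v)} = {r}"

definition Theta :: "nat \<Rightarrow> 'e set \<Rightarrow> ('e \<Rightarrow> nat) \<Rightarrow> ('e \<Rightarrow> nat) \<Rightarrow> nat set \<Rightarrow> 'e set set" where
  "Theta m E s t B = {F. F \<subseteq> E \<and> undirected_acyclic F s t \<and>
      card (components m F s t) = card B \<and>
      (\<forall>C\<in>components m F s t. \<exists>r\<in>B. r \<in> C \<and> rooted_at F s C r)}"

definition Upsilon :: "nat \<Rightarrow> 'e set \<Rightarrow> ('e \<Rightarrow> nat) \<Rightarrow> ('e \<Rightarrow> nat) \<Rightarrow> ('e \<Rightarrow> 'r::comm_ring_1)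
    \<Rightarrow> nat \<Rightarrow> 'r" where
  "Upsilon m E s t lab j = (\<Sum>\<tau>\<in>Theta m E s t {j}. \<Prod>e\<in>\<tau>. lab e)"

definition dcycle :: "'e set \<Rightarrow> ('e \<Rightarrow> nat) \<Rightarrow> ('e \<Rightarrow> nat) \<Rightarrow> 'e list \<Rightarrow> bool" where
  "dcycle E s t es \<longleftrightarrow> es \<noteq> [] \<and> set es \<subseteq> E \<and> distinct (map s es) \<and>
     (\<forall>i<length es. t (es!i) = s (es!((i+1) mod length es)))"

definition Eminus :: "'e set \<Rightarrow> ('e \<Rightarrow> 'r::{comm_ring_1,ordered_comm_semiring_strict}) \<Rightarrow> 'e set" where
  "Eminus E lab = {e\<in>E. lab e < 0}"

definition Eplus :: "'e set \<Rightarrow> ('e \<Rightarrow> 'r::{comm_ring_1,ordered_comm_semiring_strict}) \<Rightarrow> 'e set" where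
  "Eplus E lab = {e\<in>E. lab e > 0}"

definition edge_partition :: "'e set \<Rightarrow> ('e \<Rightarrow> nat) \<Rightarrow> ('e \<Rightarrow> nat)
    \<Rightarrow> ('e \<Rightarrow> 'r::{comm_ring_1,ordered_comm_semiring_strict}) \<Rightarrow> ('e \<Rightarrow> 'e set) \<Rightarrow> bool" where
  "edge_partition E s t lab mu \<longleftrightarrow>
     (\<forall>e\<in>Eminus E lab. mu e \<subseteq> Eplus E lab) \<and>
     E = Eplus E lab \<union> Eminus E lab \<and> Eplus E lab \<inter> Eminus E lab = {} \<and>
     (\<forall>es. dcycle E s t es \<longrightarrow> card (set es \<inter> Eminus E lab) \<le> 1) \<and>
     (\<forall>e\<in>Eminus E lab.
        (\<forall>e'\<in>mu e. s e' = s e) \<and>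
        (\<forall>e'\<in>mu e. \<forall>es. dcycle E s t es \<and> e' \<in> set es \<longrightarrow> t e \<in> set (map s es)) \<and>
        (\<forall>e2\<in>Eminus E lab. e2 \<noteq> e \<longrightarrow> mu e \<inter> mu e2 = {}))"

definition P_graph :: "'e set \<Rightarrow> ('e \<Rightarrow> nat) \<Rightarrow> ('e \<Rightarrow> nat)
    \<Rightarrow> ('e \<Rightarrow> 'r::{comm_ring_1,ordered_comm_semiring_strict}) \<Rightarrow> ('e \<Rightarrow> 'e set) \<Rightarrow> bool" where
  "P_graph E s t lab mu \<longleftrightarrow> edge_partition E s t lab mu \<and>
     (\<forall>e\<in>Eminus E lab. 0 \<le> lab e + (\<Sum>e'\<in>mu e. lab e'))"

definition im_mu :: "'e set \<Rightarrow> ('e \<Rightarrow> 'r::{comm_ring_1,ordered_comm_semiring_strict}) \<Rightarrow> ('e \<Rightarrow> 'e set) \<Rightarrow> 'e set" where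
  "im_mu E lab mu = (\<Union>e\<in>Eminus E lab. mu e)"

definition mu_star :: "'e set \<Rightarrow> ('e \<Rightarrow> 'r::{comm_ring_1,ordered_comm_semiring_strict}) \<Rightarrow> ('e \<Rightarrow> 'e set) \<Rightarrow> 'e \<Rightarrow> 'e" where
  "mu_star E lab mu e' = (THE e. e \<in> Eminus E lab \<and> e' \<in> mu e)"

definition Ezeta :: "nat \<Rightarrow> 'e set \<Rightarrow> ('e \<Rightarrow> nat) \<Rightarrow> ('e \<Rightarrow> nat)
    \<Rightarrow> ('e \<Rightarrow> 'r::{comm_ring_1,ordered_comm_semiring_strict}) \<Rightarrow> ('e \<Rightarrow> 'e set) \<Rightarrow> nat set \<Rightarrow> 'e set \<Rightarrow> 'e set set" where
  "Ezeta m E s t lab mu B \<zeta> = {X. X \<subseteq> \<zeta> \<inter> im_mu E lab mu \<and>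
      (\<zeta> - X) \<union> mu_star E lab mu ` X \<in> Theta m E s t B}"

definition Lambda :: "nat \<Rightarrow> 'e set \<Rightarrow> ('e \<Rightarrow> nat) \<Rightarrow> ('e \<Rightarrow> nat)
    \<Rightarrow> ('e \<Rightarrow> 'r::{comm_ring_1,ordered_comm_semiring_strict}) \<Rightarrow> ('e \<Rightarrow> 'e set) \<Rightarrow> nat set \<Rightarrow> 'e set set" where
  "Lambda m E s t lab mu B = {\<zeta> \<in> Theta m E s t B. Ezeta m E s t lab mu B \<zeta> = {{}}}"

text \<open>The bordered (m+1)x(m+1) matrix built from A and b (0-based indices; node i
  of the graph corresponds to row/column i-1).\<close>

definition bordered :: "nat \<Rightarrow> 'r::comm_ring_1 mat \<Rightarrow> 'r vec \<Rightarrow> 'r mat" where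
  "bordered m A b = mat (m+1) (m+1) (\<lambda>(i,j).
     if i < m \<and> j < m then A $$ (i,j)
     else if i < m \<and> j = m then b $ i
     else if i = m \<and> j < m then - (\<Sum>k<m. A $$ (k,j))
     else - (\<Sum>k<m. b $ k))"

end

theory Submission
  imports Defs "HOL-Library.FuncSet"
begin

locale mdg =
  fixes m :: nat and E :: "'e set" and s t :: "'e \<Rightarrow> nat"
  assumes mdg: "multidigraph m E s t"
begin

lemma finE: "finite E" using mdg unfolding multidigraph_def by auto
lemma sE: "e \<in> E \<Longrightarrow> s e \<in> nodes m" using mdg unfolding multidigraph_def by auto
lemma tE: "e \<in> E \<Longrightarrow> t e \<in> nodes m" using mdg unfolding multidigraph_def by auto
lemma stE: "e \<in> E \<Longrightarrow> s e \<noteq> t e" using mdg unfolding multidigraph_def by auto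
lemma fin_nodes: "finite (nodes m)" unfolding nodes_def by auto

definition hasout :: "nat \<Rightarrow> 'e set \<Rightarrow> bool" where
  "hasout r F \<longleftrightarrow> F \<subseteq> E \<and> (\<forall>v\<in>nodes m. v \<noteq> r \<longrightarrow> (\<exists>e\<in>F. s e = v)) \<and> (\<forall>e\<in>F. s e \<noteq> r)"
definition func :: "nat \<Rightarrow> 'e set \<Rightarrow> bool" where
  "func r F \<longleftrightarrow> hasout r F \<and> (\<forall>e1\<in>F. \<forall>e2\<in>F. s e1 = s e2 \<longrightarrow> e1 = e2)"
definition out :: "'e set \<Rightarrow> nat \<Rightarrow> 'e" where "out F v = (SOME e. e \<in> F \<and> s e = v)"
definition succ :: "'e set \<Rightarrow> nat \<Rightarrow> nat" where "succ F v = t (out F v)"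
definition reach :: "nat \<Rightarrow> 'e set \<Rightarrow> bool" where
  "reach r F \<longleftrightarrow> (\<forall>v\<in>nodes m. \<exists>k. (succ F ^^ k) v = r)"
definition arb :: "nat \<Rightarrow> 'e set \<Rightarrow> bool" where "arb r F \<longleftrightarrow> func r F \<and> reach r F"

lemma out_in: assumes "hasout r F" "v \<in> nodes m" "v \<noteq> r"
  shows "out F v \<in> F" "s (out F v) = v"
proof -
  obtain e where "e \<in> F" "s e = v" using assms unfolding hasout_def by auto
  then have "out F v \<in> F \<and> s (out F v) = v" unfolding out_def
    using someI[of "\<lambda>e. e \<in> F \<and> s e = v" e] by blast
  then show "out F v \<in> F" "s (out F v) = v" by auto
qed

lemma out_eq: assumes "func r F" "e \<in> F" shows "out F (s e) = e"
proof -
  have h: "hasout r F" and u: "\<forall>e1\<in>F. \<forall>e2\<in>F. s e1 = s e2 \<longrightarrow> e1 = e2" using assms unfolding func_def by auto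
  have "s e \<in> nodes m" "s e \<noteq> r" using h assms(2) sE unfolding hasout_def by auto
  then show ?thesis using out_in[OF h] u assms(2) by metis
qed

lemma succ_eq: "func r F \<Longrightarrow> e \<in> F \<Longrightarrow> succ F (s e) = t e"
  unfolding succ_def using out_eq by auto

lemma succ_nodes: assumes "hasout r F" "v \<in> nodes m" "v \<noteq> r" shows "succ F v \<in> nodes m"
  using out_in[OF assms] assms(1) tE unfolding succ_def hasout_def by auto

lemma closed_not_reach:
  assumes "S \<subseteq> nodes m" "x \<in> S" "r \<notin> S" "\<And>v. v \<in> S \<Longrightarrow> succ F v \<in> S"
  shows "\<not> reach r F"
proof
  assume "reach r F"
  then obtain k where k: "(succ F ^^ k) x = r" using assms(1,2) unfolding reach_def by blast
  have "(succ F ^^ j) x \<in> S" for j by (induction j) (use assms in auto)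
  then show False using k assms by metis
qed

lemma dcycle_not_reach:
  assumes f: "func r F" and C: "dcycle E s t C" "set C \<subseteq> F"
  shows "\<not> reach r F"
proof (rule closed_not_reach[of "s ` set C" "s (hd C)"])
  have h: "hasout r F" using f unfolding func_def by auto
  show "s ` set C \<subseteq> nodes m" using C h sE unfolding hasout_def by auto
  show "s (hd C) \<in> s ` set C" using C unfolding dcycle_def by auto
  show "r \<notin> s ` set C" using C h unfolding hasout_def by auto
  fix v assume "v \<in> s ` set C"
  then obtain i where i: "i < length C" "v = s (C!i)" by (auto simp: in_set_conv_nth)
  have "C!i \<in> F" using i C by auto
  then have "succ F v = t (C!i)" using succ_eq[OF f] i by auto
  also have "\<dots> = s (C ! ((i+1) mod length C))" using C i unfolding dcycle_def by auto
  also have "\<dots> \<in> s ` set C" using i by (intro imageI nth_mem) (auto intro: mod_less_divisor)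
  finally show "succ F v \<in> s ` set C" .
qed

lemma funpow_app: "(f ^^ n) ((f ^^ k) x) = (f ^^ (n + k)) x"
  by (simp add: funpow_add)

lemma periodic:
  assumes h: "hasout r F" and v: "v \<in> nodes m" and nr: "\<forall>k. (succ F ^^ k) v \<noteq> r"
  shows "\<exists>x p. 0 < p \<and> (succ F ^^ p) x = x \<and> (\<forall>k. 0 < k \<longrightarrow> k < p \<longrightarrow> (succ F ^^ k) x \<noteq> x)
              \<and> (\<forall>k. (succ F ^^ k) x \<in> nodes m - {r})"
proof -
  let ?f = "succ F"
  have inN: "(?f ^^ k) v \<in> nodes m - {r}" for k
  proof (induction k)
    case 0 then show ?case using v nr by (metis DiffI funpow_0 singletonD)
  next
    case (Suc k)
    have "(?f ^^ Suc k) v = ?f ((?f ^^ k) v)" by simp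
    moreover have "(?f ^^ Suc k) v \<noteq> r" using nr by blast
    ultimately show ?case using succ_nodes[OF h, of "(?f ^^ k) v"] Suc by auto
  qed
  have "\<not> inj (\<lambda>k. (?f ^^ k) v)"
  proof
    assume "inj (\<lambda>k. (?f ^^ k) v)"
    moreover have "finite (range (\<lambda>k. (?f ^^ k) v))"
      using inN fin_nodes by (meson finite_Diff finite_subset image_subset_iff)
    ultimately show False using finite_imageD by fastforce
  qed
  then obtain i j where ij: "i \<noteq> j" "(?f ^^ i) v = (?f ^^ j) v" unfolding inj_def by auto
  then obtain i d where id: "0 < d" "(?f ^^ i) v = (?f ^^ (i + d)) v"
  proof (cases "i < j")
    case True then show ?thesis using that[of "j - i" i] ij by auto
  next
    case False then show ?thesis using that[of "i - j" j] ij by auto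
  qed
  define x where "x = (?f ^^ i) v"
  have xd: "(?f ^^ d) x = x" using id funpow_app[of d ?f i v] unfolding x_def by (metis add.commute)
  define p where "p = (LEAST p. 0 < p \<and> (?f ^^ p) x = x)"
  have p: "0 < p \<and> (?f ^^ p) x = x" unfolding p_def by (rule LeastI[of _ d]) (use id xd in auto)
  have pm: "\<forall>k. 0 < k \<longrightarrow> k < p \<longrightarrow> (?f ^^ k) x \<noteq> x" unfolding p_def using not_less_Least by blast
  have "(?f ^^ k) x \<in> nodes m - {r}" for k unfolding x_def using inN by (simp add: funpow_app)
  then show ?thesis using p pm by blast
qed

lemma periodic_distinct:
  assumes "(f ^^ p) x = x" "\<forall>k. 0 < k \<longrightarrow> k < p \<longrightarrow> (f ^^ k) x \<noteq> x" "a < b" "b < p"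
  shows "(f ^^ a) x \<noteq> (f ^^ b) x"
proof
  assume eq: "(f ^^ a) x = (f ^^ b) x"
  define y where "y = (f ^^ a) x"
  have y: "(f ^^ (b - a)) y = y" using eq assms funpow_app[of "b-a" f a x] unfolding y_def
    by (metis le_add_diff_inverse2 less_imp_le_nat)
  have x: "x = (f ^^ (p - a)) y" using assms unfolding y_def
    by (simp add: funpow_app)
  have "(f ^^ (b - a)) x = (f ^^ (p - a)) ((f ^^ (b - a)) y)" unfolding x
    by (simp add: funpow_app add.commute)
  also have "\<dots> = x" using y x by simp
  finally show False using assms by auto
qed

lemma not_reach_dcycle:
  assumes h: "hasout r F" and nr: "\<not> reach r F"
  shows "\<exists>C. dcycle E s t C \<and> set C \<subseteq> F"
proof -
  obtain v where v: "v \<in> nodes m" "\<forall>k. (succ F ^^ k) v \<noteq> r" using nr unfolding reach_def by auto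
  obtain x p where xp: "0 < p" "(succ F ^^ p) x = x" "\<forall>k. 0 < k \<longrightarrow> k < p \<longrightarrow> (succ F ^^ k) x \<noteq> x"
    "\<forall>k. (succ F ^^ k) x \<in> nodes m - {r}" using periodic[OF h v] by blast
  define C where "C = map (\<lambda>k. out F ((succ F ^^ k) x)) [0..<p]"
  have oi: "out F ((succ F ^^ k) x) \<in> F" "s (out F ((succ F ^^ k) x)) = (succ F ^^ k) x" for k
    using out_in[OF h] xp(4) by auto
  have "dcycle E s t C" unfolding dcycle_def
  proof (intro conjI allI impI)
    show "C \<noteq> []" using xp unfolding C_def by auto
    show "set C \<subseteq> E" using oi h unfolding C_def hasout_def by auto
    have ms: "map s C = map (\<lambda>k. (succ F ^^ k) x) [0..<p]" unfolding C_def using oi by auto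
    show "distinct (map s C)" unfolding ms distinct_conv_nth
      using periodic_distinct[OF xp(2) xp(3)] by (auto simp: nat_neq_iff)
    fix i assume i: "i < length C"
    then have ip: "i < p" unfolding C_def by auto
    have "t (C!i) = (succ F ^^ Suc i) x" unfolding C_def using ip by (simp add: succ_def)
    also have "\<dots> = (succ F ^^ ((i+1) mod p)) x"
    proof (cases "Suc i = p")
      case True then show ?thesis using xp by simp
    next
      case False then show ?thesis using ip by simp
    qed
    also have "\<dots> = s (C ! ((i+1) mod length C))" unfolding C_def using oi xp(1) by simp
    finally show "t (C!i) = s (C ! ((i+1) mod length C))" .
  qed
  moreover have "set C \<subseteq> F" unfolding C_def using oi by auto
  ultimately show ?thesis by blast
qed

end


context mdg begin

definition joins :: "'e \<Rightarrow> nat \<Rightarrow> nat \<Rightarrow> bool" where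
  "joins e x y \<longleftrightarrow> (s e = x \<and> t e = y) \<or> (t e = x \<and> s e = y)"

definition upath :: "'e set \<Rightarrow> 'e list \<Rightarrow> nat list \<Rightarrow> bool" where
  "upath F es vs \<longleftrightarrow> length vs = Suc (length es) \<and> set es \<subseteq> F \<and> distinct vs \<and>
     (\<forall>i<length es. joins (es!i) (vs!i) (vs!Suc i))"

lemma uconn_step: "(a, b) \<in> ({(s e, t e) |e. e \<in> F} \<union> {(t e, s e) |e. e \<in> F}) \<longleftrightarrow> (\<exists>e\<in>F. joins e a b)"
  unfolding joins_def by auto

lemma uconn_edge: "e \<in> F \<Longrightarrow> joins e a b \<Longrightarrow> (a, b) \<in> uconn F s t"
proof -
  assume a: "e \<in> F" "joins e a b"
  have "(a, b) \<in> ({(s e, t e) |e. e \<in> F} \<union> {(t e, s e) |e. e \<in> F})"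
    using uconn_step a by blast
  then show ?thesis unfolding uconn_def by (rule r_into_rtrancl)
qed

lemma uconn_trans: "(a, b) \<in> uconn F s t \<Longrightarrow> (b, c) \<in> uconn F s t \<Longrightarrow> (a, c) \<in> uconn F s t"
  unfolding uconn_def by (rule rtrancl_trans)

lemma uconn_sym: assumes "(a, b) \<in> uconn F s t" shows "(b, a) \<in> uconn F s t"
proof -
  let ?R = "{(s e, t e) |e. e \<in> F} \<union> {(t e, s e) |e. e \<in> F}"
  have "?R\<inverse> = ?R" by auto
  then show ?thesis using assms rtrancl_converseI[of a b ?R] unfolding uconn_def by simp
qed

lemma upath_exists:
  assumes "(a, b) \<in> uconn F s t"
  shows "\<exists>es vs. upath F es vs \<and> vs!0 = a \<and> last vs = b"
  using assms unfolding uconn_def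
proof (induction rule: rtrancl_induct)
  case base
  show ?case by (rule exI[of _ "[]"], rule exI[of _ "[a]"]) (auto simp: upath_def)
next
  case (step b c)
  obtain es vs where p: "upath F es vs" "vs!0 = a" "last vs = b" using step by auto
  obtain e where e: "e \<in> F" "joins e b c" using step(2) uconn_step by blast
  have lv: "length vs = Suc (length es)" using p unfolding upath_def by auto
  show ?case
  proof (cases "c \<in> set vs")
    case True
    then obtain i where i: "i < length vs" "vs!i = c" by (auto simp: in_set_conv_nth)
    have "upath F (take i es) (take (Suc i) vs)" using p(1) i lv unfolding upath_def
      by (auto dest: in_set_takeD)
    moreover have "take (Suc i) vs ! 0 = a" using p by auto
    moreover have "last (take (Suc i) vs) = c" using i by (simp add: take_Suc_conv_app_nth)
    ultimately show ?thesis by blast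
  next
    case False
    have ne: "vs \<noteq> []" using lv by auto
    have "last vs = vs ! (length vs - 1)" using ne by (rule last_conv_nth)
    then have lb: "vs ! length es = b" using p(3) lv by simp
    have "upath F (es @ [e]) (vs @ [c])" using p(1) False e lv lb unfolding upath_def
      by (auto simp: nth_append less_Suc_eq)
    moreover have "(vs @ [c]) ! 0 = a" using p ne by (simp add: nth_append)
    ultimately show ?thesis by fastforce
  qed
qed

lemma upath_distinct_edges: assumes "upath F es vs" shows "distinct es"
  unfolding distinct_conv_nth
proof (intro allI impI)
  fix i j assume ij: "i < length es" "j < length es" "i \<noteq> j"
  show "es ! i \<noteq> es ! j"
  proof
    assume eq: "es ! i = es ! j"
    have d: "distinct vs" and l: "length vs = Suc (length es)"
      and ji: "joins (es!i) (vs!i) (vs!Suc i)" and jj: "joins (es!j) (vs!j) (vs!Suc j)"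
      using assms ij unfolding upath_def by auto
    have D1: "vs!i = vs!j \<or> vs!i = vs!Suc j" and D2: "vs!Suc i = vs!j \<or> vs!Suc i = vs!Suc j"
      using ji jj eq unfolding joins_def by auto
    have I: "\<And>a b. a < length vs \<Longrightarrow> b < length vs \<Longrightarrow> vs!a = vs!b \<Longrightarrow> a = b"
      using d nth_eq_iff_index_eq by blast
    have "i = j \<or> i = Suc j" using D1 I[of i j] I[of i "Suc j"] ij l by auto
    moreover have "Suc i = j \<or> i = j" using D2 I[of "Suc i" j] I[of "Suc i" "Suc j"] ij l by auto
    ultimately show False using ij by auto
  qed
qed

lemma acyclic_bridge:
  assumes ac: "undirected_acyclic F s t" and e: "e \<in> F"
  shows "(t e, s e) \<notin> uconn (F - {e}) s t"
proof
  assume "(t e, s e) \<in> uconn (F - {e}) s t"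
  then obtain pes pvs where p: "upath (F - {e}) pes pvs" "pvs!0 = t e" "last pvs = s e"
    using upath_exists by blast
  have lv: "length pvs = Suc (length pes)" and d: "distinct pvs" and sub: "set pes \<subseteq> F - {e}"
    and jn: "\<forall>i<length pes. joins (pes!i) (pvs!i) (pvs!Suc i)"
    using p(1) unfolding upath_def by auto
  have dp: "distinct pes" using upath_distinct_edges[OF p(1)] .
  have ne: "pvs \<noteq> []" using lv by auto
  have "last pvs = pvs ! (length pvs - 1)" using ne by (rule last_conv_nth)
  then have lastn: "pvs ! length pes = s e" using p(3) lv by simp
  have bl: "butlast (s e # pvs) = s e # butlast pvs" using ne by simp
  have "distinct (butlast pvs @ [last pvs])" using d ne by simp
  then have "s e \<notin> set (butlast pvs)" "distinct (butlast pvs)" using p(3) by auto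
  then have "undirected_cycle F s t (e # pes) (s e # pvs)"
    unfolding undirected_cycle_def
    using e sub dp lv lastn jn p(2) bl
    by (auto simp: joins_def less_Suc_eq_0_disj)
  then show False using ac unfolding undirected_acyclic_def by blast
qed

lemma reach_conn:
  assumes h: "hasout r F" and Fe: "\<And>u. u \<in> nodes m \<Longrightarrow> u \<noteq> r \<Longrightarrow> out F u \<in> Fe"
  shows "w \<in> nodes m \<Longrightarrow> (succ F ^^ k) w = r \<Longrightarrow> (w, r) \<in> uconn Fe s t"
proof (induction k arbitrary: w)
  case 0 then show ?case unfolding uconn_def by simp
next
  case (Suc k)
  show ?case
  proof (cases "w = r")
    case True then show ?thesis unfolding uconn_def by simp
  next
    case False
    have "(succ F ^^ k) (succ F w) = r" using Suc(3) by (simp add: funpow_Suc_right del: funpow.simps)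
    then have "(succ F w, r) \<in> uconn Fe s t" using Suc succ_nodes[OF h] False by auto
    moreover have "(w, succ F w) \<in> uconn Fe s t"
      using uconn_edge[OF Fe[OF Suc(2) False]] out_in[OF h Suc(2) False] unfolding succ_def joins_def by auto
    ultimately show ?thesis using uconn_trans by blast
  qed
qed

lemma comp_mem: "v \<in> nodes m \<Longrightarrow> v \<in> {w \<in> nodes m. (v, w) \<in> uconn F s t}"
  unfolding uconn_def by auto

lemma theta_arb:
  assumes r: "r \<in> nodes m" and F: "F \<in> Theta m E s t {r}"
  shows "arb r F"
proof -
  have FE: "F \<subseteq> E" and ac: "undirected_acyclic F s t" and c1: "card (components m F s t) = 1"
    and rt: "\<forall>C\<in>components m F s t. r \<in> C \<and> rooted_at F s C r"
    using F unfolding Theta_def by auto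
  define comp where "comp v = {w \<in> nodes m. (v, w) \<in> uconn F s t}" for v
  have cc: "comp v \<in> components m F s t" if "v \<in> nodes m" for v
    using that unfolding comp_def components_def by auto
  obtain X where X: "components m F s t = {X}" using c1 card_1_singletonE by blast
  have cr: "comp r = nodes m"
  proof
    show "comp r \<subseteq> nodes m" unfolding comp_def by auto
    show "nodes m \<subseteq> comp r"
    proof
      fix v assume v: "v \<in> nodes m"
      have "comp v = X" "comp r = X" using cc[OF v] cc[OF r] X by auto
      then show "v \<in> comp r" using comp_mem[OF v] unfolding comp_def by auto
    qed
  qed
  have "rooted_at F s (nodes m) r" using rt cc[OF r] cr by auto
  then have ro: "{v \<in> nodes m. \<not> (\<exists>e\<in>F. s e = v)} = {r}" unfolding rooted_at_def .
  have h: "hasout r F" unfolding hasout_def using FE ro by blast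
  have re: "reach r F"
  proof (rule ccontr)
    assume nr: "\<not> reach r F"
    then obtain v where v: "v \<in> nodes m" "\<forall>k. (succ F ^^ k) v \<noteq> r" unfolding reach_def by auto
    obtain x p where xp: "0 < p" "(succ F ^^ p) x = x" "\<forall>k. 0 < k \<longrightarrow> k < p \<longrightarrow> (succ F ^^ k) x \<noteq> x"
      "\<forall>k. (succ F ^^ k) x \<in> nodes m - {r}" using periodic[OF h v] by blast
    define g where "g = out F x"
    have xN: "x \<in> nodes m" "x \<noteq> r" using xp(4)[rule_format, of 0] by auto
    have g: "g \<in> F" "s g = x" "t g = succ F x" using out_in[OF h xN] unfolding g_def succ_def by auto
    have "1 \<le> k \<Longrightarrow> k \<le> p \<Longrightarrow> (succ F x, (succ F ^^ k) x) \<in> uconn (F - {g}) s t" for k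
    proof (induction k)
      case 0 then show ?case by simp
    next
      case (Suc k)
      show ?case
      proof (cases "k = 0")
        case True then show ?thesis unfolding uconn_def by (simp add: rtrancl.rtrancl_refl)
      next
        case False
        let ?u = "(succ F ^^ k) x"
        have u: "?u \<in> nodes m" "?u \<noteq> r" using xp(4) by auto
        have u3: "?u \<noteq> x" using xp(3) False Suc(3) by simp
        note u = u u3
        have "out F ?u \<in> F - {g}" using out_in[OF h u(1,2)] u(3) g by auto
        moreover have "joins (out F ?u) ?u (succ F ?u)"
          using out_in[OF h u(1,2)] unfolding succ_def joins_def by simp
        ultimately have "(?u, succ F ?u) \<in> uconn (F - {g}) s t" by (rule uconn_edge)
        moreover have "(succ F x, ?u) \<in> uconn (F - {g}) s t" using Suc.IH Suc(3) False by simp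
        ultimately have "(succ F x, succ F ?u) \<in> uconn (F - {g}) s t" using uconn_trans by blast
        then show ?thesis by simp
      qed
    qed
    then have "(succ F x, (succ F ^^ p) x) \<in> uconn (F - {g}) s t" using xp(1) by simp
    then have "(t g, s g) \<in> uconn (F - {g}) s t" using xp(2) g by simp
    then show False using acyclic_bridge[OF ac g(1)] by simp
  qed
  have un: "\<forall>e1\<in>F. \<forall>e2\<in>F. s e1 = s e2 \<longrightarrow> e1 = e2"
  proof (intro ballI impI; rule ccontr)
    fix e1 e2 assume e12: "e1 \<in> F" "e2 \<in> F" "s e1 = s e2" "e1 \<noteq> e2"
    define v where "v = s e1"
    have vN: "v \<in> nodes m" "v \<noteq> r" using e12 FE sE h unfolding v_def hasout_def by auto
    obtain e where e: "e \<in> F" "s e = v" "e \<noteq> out F v"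
    proof (cases "e1 = out F v")
      case True then show ?thesis using that[of e2] e12 unfolding v_def by auto
    next
      case False then show ?thesis using that[of e1] e12 unfolding v_def by auto
    qed
    have Fe: "out F u \<in> F - {e}" if "u \<in> nodes m" "u \<noteq> r" for u
      using out_in[OF h that] e by auto
    have "(w, r) \<in> uconn (F - {e}) s t" if "w \<in> nodes m" for w
      using re that reach_conn[OF h Fe] unfolding reach_def by blast
    then have "(t e, r) \<in> uconn (F - {e}) s t" "(v, r) \<in> uconn (F - {e}) s t"
      using tE e FE vN by auto
    then have "(t e, s e) \<in> uconn (F - {e}) s t" using uconn_sym[of v r] uconn_trans[of "t e" r] e by blast
    then show False using acyclic_bridge[OF ac e(1)] by simp
  qed
  show ?thesis unfolding arb_def func_def using h un re by auto
qed

lemma arb_theta: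
  assumes r: "r \<in> nodes m" and a: "arb r F"
  shows "F \<in> Theta m E s t {r}"
proof -
  have f: "func r F" and re: "reach r F" using a unfolding arb_def by auto
  have h: "hasout r F" and un: "\<forall>e1\<in>F. \<forall>e2\<in>F. s e1 = s e2 \<longrightarrow> e1 = e2" using f unfolding func_def by auto
  have FE: "F \<subseteq> E" using h unfolding hasout_def by auto
  have ac: "undirected_acyclic F s t" unfolding undirected_acyclic_def
  proof (rule notI, elim exE)
    fix es vs assume uc: "undirected_cycle F s t es vs"
    let ?k = "length es"
    have ne: "es \<noteq> []" and sub: "set es \<subseteq> F" and de: "distinct es" and lv: "length vs = ?k + 1"
      and cl: "vs ! 0 = vs ! ?k" and dv: "distinct (butlast vs)"
      and jn: "\<forall>i<?k. (s (es!i) = vs!i \<and> t (es!i) = vs!(i+1)) \<or> (t (es!i) = vs!i \<and> s (es!i) = vs!(i+1))"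
      using uc unfolding undirected_cycle_def by auto
    define V where "V = set (butlast vs)"
    have inV: "vs ! i \<in> V" if "i \<le> ?k" for i
    proof (cases "i = ?k")
      case True
      have "vs ! 0 \<in> V" using ne lv unfolding V_def by (simp add: nth_butlast[symmetric] nth_mem)
      then show ?thesis using True cl by simp
    next
      case False
      then have "i < length (butlast vs)" using that lv by simp
      then show ?thesis unfolding V_def using nth_butlast[of i vs] by (metis nth_mem)
    qed
    have stV: "s (es!i) \<in> V \<and> t (es!i) \<in> V" if "i < ?k" for i
      using jn that inV by (metis Suc_eq_plus1 less_imp_le_nat Suc_leI)
    have SV: "s ` set es \<subseteq> V" using stV by (auto simp: in_set_conv_nth)
    have "inj_on s (set es)" using un sub unfolding inj_on_def by auto
    then have "card (s ` set es) = ?k" using de by (simp add: card_image distinct_card)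
    moreover have "card V = ?k" using dv lv unfolding V_def by (simp add: distinct_card)
    ultimately have SeqV: "s ` set es = V" using SV by (metis card_subset_eq finite_set V_def)
    have "\<not> reach r F"
    proof (rule closed_not_reach[of "s ` set es" "s (es!0)"])
      show "s ` set es \<subseteq> nodes m" using sub FE sE by auto
      show "s (es!0) \<in> s ` set es" using ne by auto
      show "r \<notin> s ` set es" using sub h unfolding hasout_def by auto
      fix v assume "v \<in> s ` set es"
      then obtain i where i: "i < ?k" "v = s (es!i)" by (auto simp: in_set_conv_nth)
      have "succ F v = t (es!i)" using succ_eq[OF f] i sub nth_mem by blast
      then show "succ F v \<in> s ` set es" using stV i SeqV by auto
    qed
    then show False using re by simp
  qed
  have cr: "(w, r) \<in> uconn F s t" if "w \<in> nodes m" for w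
    using re that reach_conn[OF h, of F] out_in[OF h] unfolding reach_def by blast
  have comps: "components m F s t = {nodes m}"
  proof -
    have "{w \<in> nodes m. (v, w) \<in> uconn F s t} = nodes m" if "v \<in> nodes m" for v
      using cr that uconn_sym uconn_trans by blast
    then show ?thesis unfolding components_def using r by auto
  qed
  have "rooted_at F s (nodes m) r" unfolding rooted_at_def using h r unfolding hasout_def by auto
  then show ?thesis unfolding Theta_def using FE ac comps r by auto
qed

lemma theta_iff: "r \<in> nodes m \<Longrightarrow> F \<in> Theta m E s t {r} \<longleftrightarrow> arb r F"
  using theta_arb arb_theta by blast

end


locale pg = mdg m E s t for m :: nat and E :: "'e set" and s t :: "'e \<Rightarrow> nat" +
  fixes lab :: "'e \<Rightarrow> 'r::{comm_ring_1,ordered_comm_semiring_strict}" and mu :: "'e \<Rightarrow> 'e set"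
  assumes pg: "P_graph E s t lab mu"
begin

abbreviation "Em \<equiv> Eminus E lab"
abbreviation "Ep \<equiv> Eplus E lab"
abbreviation "IM \<equiv> im_mu E lab mu"
abbreviation "ms \<equiv> mu_star E lab mu"

definition repl :: "'e set \<Rightarrow> 'e set \<Rightarrow> 'e set" where
  "repl T Y = (T - Y) \<union> ms ` Y"

lemma ep: "edge_partition E s t lab mu" using pg unfolding P_graph_def by auto
lemma muEp: "e \<in> Em \<Longrightarrow> mu e \<subseteq> Ep" using ep unfolding edge_partition_def by auto
lemma EpEm: "E = Ep \<union> Em" "Ep \<inter> Em = {}" using ep unfolding edge_partition_def by auto
lemma EmE: "Em \<subseteq> E" unfolding Eminus_def by auto
lemma EpE: "Ep \<subseteq> E" unfolding Eplus_def by auto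
lemma cyc1: "dcycle E s t C \<Longrightarrow> card (set C \<inter> Em) \<le> 1" using ep unfolding edge_partition_def by auto
lemma mu_s: "e \<in> Em \<Longrightarrow> e' \<in> mu e \<Longrightarrow> s e' = s e" using ep unfolding edge_partition_def by auto
lemma mu_b: "e \<in> Em \<Longrightarrow> e' \<in> mu e \<Longrightarrow> dcycle E s t C \<Longrightarrow> e' \<in> set C \<Longrightarrow> t e \<in> set (map s C)"
  using ep unfolding edge_partition_def by blast
lemma mu_c: "e \<in> Em \<Longrightarrow> e2 \<in> Em \<Longrightarrow> e \<noteq> e2 \<Longrightarrow> mu e \<inter> mu e2 = {}"
  using ep unfolding edge_partition_def by blast
lemma nonneg: "e \<in> Em \<Longrightarrow> 0 \<le> lab e + (\<Sum>e'\<in>mu e. lab e')" using pg unfolding P_graph_def by auto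

lemma IM_Ep: "IM \<subseteq> Ep" unfolding im_mu_def using muEp by auto

lemma ms_eq: assumes "e \<in> Em" "e' \<in> mu e" shows "ms e' = e"
  unfolding mu_star_def
proof (rule the_equality)
  show "e \<in> Em \<and> e' \<in> mu e" using assms by auto
  fix x assume "x \<in> Em \<and> e' \<in> mu x" then show "x = e" using mu_c assms by blast
qed

lemma ms_props: assumes "y \<in> IM" shows "ms y \<in> Em" "y \<in> mu (ms y)" "s (ms y) = s y"
proof -
  obtain e where e: "e \<in> Em" "y \<in> mu e" using assms unfolding im_mu_def by auto
  then show "ms y \<in> Em" "y \<in> mu (ms y)" "s (ms y) = s y" using ms_eq mu_s by auto
qed

lemma ms_not_IM: "y \<in> IM \<Longrightarrow> ms y \<notin> IM" using ms_props IM_Ep EpEm by blast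

lemma repl_func: assumes f: "func r T" and Y: "Y \<subseteq> T \<inter> IM" shows "func r (repl T Y)"
proof -
  have h: "hasout r T" and u: "\<forall>e1\<in>T. \<forall>e2\<in>T. s e1 = s e2 \<longrightarrow> e1 = e2" using f unfolding func_def by auto
  have msY: "\<And>y. y \<in> Y \<Longrightarrow> ms y \<in> Em \<and> s (ms y) = s y" using ms_props Y by auto
  have "hasout r (repl T Y)" unfolding hasout_def
  proof (intro conjI ballI impI)
    show "repl T Y \<subseteq> E" unfolding repl_def using h msY EmE unfolding hasout_def by auto
    fix v assume v: "v \<in> nodes m" "v \<noteq> r"
    then obtain e where e: "e \<in> T" "s e = v" using h unfolding hasout_def by auto
    show "\<exists>e\<in>repl T Y. s e = v"
    proof (cases "e \<in> Y")
      case True then show ?thesis using msY e unfolding repl_def by force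
    next
      case False then show ?thesis using e unfolding repl_def by auto
    qed
  next
    fix e assume "e \<in> repl T Y" then show "s e \<noteq> r" using h msY Y unfolding repl_def hasout_def by auto
  qed
  moreover have "\<forall>e1\<in>repl T Y. \<forall>e2\<in>repl T Y. s e1 = s e2 \<longrightarrow> e1 = e2"
  proof (intro ballI impI)
    fix e1 e2 assume e: "e1 \<in> repl T Y" "e2 \<in> repl T Y" "s e1 = s e2"
    have YT: "\<And>y. y \<in> Y \<Longrightarrow> y \<in> T" using Y by auto
    consider "e1 \<in> T - Y" "e2 \<in> T - Y" | y1 where "y1 \<in> Y" "e1 = ms y1" "e2 \<in> T - Y"
      | y2 where "e1 \<in> T - Y" "y2 \<in> Y" "e2 = ms y2"
      | y1 y2 where "y1 \<in> Y" "e1 = ms y1" "y2 \<in> Y" "e2 = ms y2"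
      using e(1,2) unfolding repl_def by blast
    then show "e1 = e2"
    proof cases
      case 1 then show ?thesis using u e(3) by auto
    next
      case 2
      then have "s y1 = s e2" using msY e(3) by auto
      then have "y1 = e2" using u YT 2 by blast
      then show ?thesis using 2 by auto
    next
      case 3
      then have "s e1 = s y2" using msY e(3) by auto
      then have "e1 = y2" using u YT 3 by blast
      then show ?thesis using 3 by auto
    next
      case 4
      then have "s y1 = s y2" using msY e(3) by auto
      then have "y1 = y2" using u YT 4 by blast
      then show ?thesis using 4 by auto
    qed
  qed
  ultimately show ?thesis unfolding func_def by auto
qed

lemma repl_one:
  assumes a: "arb r Z" and e: "e \<in> Z" "e \<in> Em" and e': "e' \<in> mu e"
  shows "arb r (Z - {e} \<union> {e'})"
proof -
  have f: "func r Z" and re: "reach r Z" using a unfolding arb_def by auto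
  have h: "hasout r Z" and u: "\<forall>e1\<in>Z. \<forall>e2\<in>Z. s e1 = s e2 \<longrightarrow> e1 = e2" using f unfolding func_def by auto
  have e'E: "e' \<in> E" "s e' = s e" "e' \<noteq> e" using e' muEp[OF e(2)] EpE mu_s[OF e(2) e'] EpEm e(2) by auto
  let ?Z = "Z - {e} \<union> {e'}"
  have h': "hasout r ?Z" unfolding hasout_def
  proof (intro conjI ballI impI)
    show "?Z \<subseteq> E" using h e'E unfolding hasout_def by auto
    fix v assume v: "v \<in> nodes m" "v \<noteq> r"
    then obtain x where x: "x \<in> Z" "s x = v" using h unfolding hasout_def by auto
    show "\<exists>x\<in>?Z. s x = v"
    proof (cases "x = e")
      case True then show ?thesis using x e'E by auto
    next
      case False then show ?thesis using x by auto
    qed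
  next
    fix x assume "x \<in> ?Z" then show "s x \<noteq> r" using h e'E e unfolding hasout_def by auto
  qed
  have f': "func r ?Z" unfolding func_def using h' u e'E e by auto
  have "reach r ?Z"
  proof (rule ccontr)
    assume "\<not> reach r ?Z"
    then obtain C where C: "dcycle E s t C" "set C \<subseteq> ?Z" using not_reach_dcycle[OF h'] by blast
    show False
    proof (cases "e' \<in> set C")
      case False
      then have "set C \<subseteq> Z" using C by auto
      then show False using dcycle_not_reach[OF f C(1)] re by auto
    next
      case True
      have te: "t e \<in> s ` set C" using mu_b[OF e(2) e' C(1) True] by auto
      have "\<not> reach r Z"
      proof (rule closed_not_reach[of "s ` set C" "t e"])
        show "s ` set C \<subseteq> nodes m" using C h' sE unfolding hasout_def by auto
        show "t e \<in> s ` set C" by (rule te)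
        show "r \<notin> s ` set C" using C h' unfolding hasout_def by auto
        fix v assume "v \<in> s ` set C"
        then obtain i where i: "i < length C" "v = s (C!i)" by (auto simp: in_set_conv_nth)
        have Ci: "C!i \<in> ?Z" using C(2) nth_mem[OF i(1)] by blast
        show "succ Z v \<in> s ` set C"
        proof (cases "C!i = e'")
          case True
          then have "succ Z v = t e" using succ_eq[OF f e(1)] e'E i by auto
          then show ?thesis using te by simp
        next
          case False
          then have "C!i \<in> Z" using Ci by auto
          then have "succ Z v = t (C!i)" using succ_eq[OF f] i by auto
          also have "\<dots> = s (C ! ((i+1) mod length C))" using C i unfolding dcycle_def by auto
          also have "\<dots> \<in> s ` set C" using i by (intro imageI nth_mem) (auto intro: mod_less_divisor)
          finally show ?thesis .
        qed
      qed
      then show False using re by simp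
    qed
  qed
  then show ?thesis using f' unfolding arb_def by auto
qed

lemma repl_union:
  assumes a: "arb r T" and Y1: "Y1 \<subseteq> T \<inter> IM" and Y2: "Y2 \<subseteq> T \<inter> IM"
    and a1: "arb r (repl T Y1)" and a2: "arb r (repl T Y2)"
  shows "arb r (repl T (Y1 \<union> Y2))"
proof -
  have f: "func r (repl T (Y1 \<union> Y2))" using repl_func a Y1 Y2 unfolding arb_def by auto
  have h: "hasout r (repl T (Y1 \<union> Y2))" using f unfolding func_def by auto
  have msEm: "ms ` (Y1 \<union> Y2) \<subseteq> Em" using ms_props Y1 Y2 by auto
  have "reach r (repl T (Y1 \<union> Y2))"
  proof (rule ccontr)
    assume "\<not> reach r (repl T (Y1 \<union> Y2))"
    then obtain C where C: "dcycle E s t C" "set C \<subseteq> repl T (Y1 \<union> Y2)" using not_reach_dcycle[OF h] by blast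
    show False
    proof (cases "set C \<subseteq> repl T Y1")
      case True then show False using dcycle_not_reach[OF _ C(1) True] a1 unfolding arb_def by auto
    next
      case False
      then obtain c1 where c1: "c1 \<in> set C" "c1 \<notin> repl T Y1" by auto
      show False
      proof (cases "set C \<subseteq> repl T Y2")
        case True then show False using dcycle_not_reach[OF _ C(1) True] a2 unfolding arb_def by auto
      next
        case False
        then obtain c2 where c2: "c2 \<in> set C" "c2 \<notin> repl T Y2" by auto
        have "c1 \<in> ms ` Y2" using c1 C unfolding repl_def by auto
        moreover have "c2 \<in> ms ` Y1" using c2 C unfolding repl_def by auto
        ultimately have "c1 \<noteq> c2" "c1 \<in> Em" "c2 \<in> Em" using c1 msEm unfolding repl_def by auto
        then have "card {c1, c2} \<le> card (set C \<inter> Em)" using c1 c2 by (intro card_mono) auto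
        then show False using cyc1[OF C(1)] \<open>c1 \<noteq> c2\<close> by auto
      qed
    qed
  qed
  then show ?thesis using f unfolding arb_def by auto
qed

end


lemma prod_pos_ne:
  fixes f :: "'a \<Rightarrow> 'r::{comm_semiring_1,ordered_comm_semiring_strict}"
  assumes "finite A" "A \<noteq> {}" "\<And>a. a \<in> A \<Longrightarrow> 0 < f a" shows "0 < prod f A"
  using assms
proof (induction A rule: finite_ne_induct)
  case (singleton x) then show ?case by simp
next
  case (insert x F) then show ?case by (simp add: mult_pos_pos)
qed

lemma prod_nonneg_ne:
  fixes f :: "'a \<Rightarrow> 'r::{comm_semiring_1,ordered_comm_semiring_strict}"
  assumes "finite A" "A \<noteq> {}" "\<And>a. a \<in> A \<Longrightarrow> 0 \<le> f a" shows "0 \<le> prod f A"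
  using assms
proof (induction A rule: finite_ne_induct)
  case (singleton x) then show ?case by simp
next
  case (insert x F) then show ?case by (simp add: mult_nonneg_nonneg)
qed

context mdg begin

lemma finite_arbs: "finite {T. arb r T}"
proof -
  have "{T. arb r T} \<subseteq> Pow E" unfolding arb_def func_def hasout_def by auto
  then show ?thesis using finE finite_subset by blast
qed

lemma arb_fin: "arb r T \<Longrightarrow> finite T"
  unfolding arb_def func_def hasout_def using finE finite_subset by blast

lemma arb_ne: assumes "m \<ge> 1" "r \<in> nodes m" "arb r T" shows "T \<noteq> {}"
proof -
  obtain v where v: "v \<in> nodes m" "v \<noteq> r"
  proof (cases "r = 1")
    case True then show ?thesis using that[of 2] assms unfolding nodes_def by auto
  next
    case False then show ?thesis using that[of 1] assms unfolding nodes_def by auto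
  qed
  then show ?thesis using assms(3) unfolding arb_def func_def hasout_def by auto
qed

lemma ups_arb: "r \<in> nodes m \<Longrightarrow> Upsilon m E s t lab r = (\<Sum>T\<in>{T. arb r T}. prod lab T)"
  unfolding Upsilon_def using theta_iff by (intro sum.cong) auto

end

context pg begin

definition Lam :: "nat \<Rightarrow> 'e set set" where
  "Lam r = {Z. arb r Z \<and> (\<forall>X. X \<subseteq> Z \<inter> IM \<longrightarrow> arb r (repl Z X) \<longrightarrow> X = {})}"

lemma repl_empty: "repl Z {} = Z" unfolding repl_def by auto

lemma lambda_iff: assumes r: "r \<in> nodes m" shows "Lambda m E s t lab mu {r} = Lam r"
proof -
  have "Ezeta m E s t lab mu {r} Z = {X. X \<subseteq> Z \<inter> IM \<and> arb r (repl Z X)}" for Z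
    unfolding Ezeta_def repl_def using theta_iff[OF r] by auto
  note ez = this
  have sing: "\<And>S. {} \<in> S \<Longrightarrow> (S = {{}}) \<longleftrightarrow> (\<forall>X\<in>S. X = {})" by blast
  have "Z \<in> Lambda m E s t lab mu {r} \<longleftrightarrow> Z \<in> Lam r" for Z
    proof (cases "arb r Z")
      case True
      then have "{} \<in> Ezeta m E s t lab mu {r} Z" unfolding ez using repl_empty by simp
      then have "Ezeta m E s t lab mu {r} Z = {{}} \<longleftrightarrow> (\<forall>X. X \<subseteq> Z \<inter> IM \<longrightarrow> arb r (repl Z X) \<longrightarrow> X = {})"
        using sing unfolding ez by blast
      then show ?thesis unfolding Lambda_def Lam_def using theta_iff[OF r] True by simp
    next
      case False
      then show ?thesis unfolding Lambda_def Lam_def using theta_iff[OF r] by simp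
    qed
  then show ?thesis by blast
qed

definition Exp :: "'e set \<Rightarrow> ('e \<Rightarrow> 'e) \<Rightarrow> 'e set" where
  "Exp Z c = (Z - Em) \<union> c ` (Z \<inter> Em)"

definition Pc :: "'e set \<Rightarrow> ('e \<Rightarrow> 'e) set" where
  "Pc Z = PiE (Z \<inter> Em) (\<lambda>e. insert e (mu e))"

lemma fin_mu: assumes "e \<in> Em" shows "finite (mu e)"
proof -
  have "mu e \<subseteq> E" using muEp[OF assms] EpE by blast
  then show ?thesis using finE by (rule finite_subset)
qed

definition phi :: "'e \<Rightarrow> 'r" where
  "phi e = (if e \<in> Em then lab e + sum lab (mu e) else lab e)"

lemma c_props: assumes "c \<in> Pc Z" "e \<in> Z \<inter> Em"
  shows "c e \<in> insert e (mu e)" "s (c e) = s e" "c e \<in> E" "c e \<in> Em \<Longrightarrow> c e = e" "c e \<noteq> e \<Longrightarrow> c e \<in> mu e"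
proof -
  show ce: "c e \<in> insert e (mu e)" using assms unfolding Pc_def by auto
  show "s (c e) = s e" using ce mu_s assms by auto
  show "c e \<in> E" using ce muEp EpE EmE assms by auto
  show "c e \<in> Em \<Longrightarrow> c e = e" using ce muEp EpEm assms by auto
  show "c e \<noteq> e \<Longrightarrow> c e \<in> mu e" using ce by auto
qed

lemma exp_arb: assumes a: "arb r Z" and c: "c \<in> Pc Z" shows "arb r (Exp Z c)"
proof -
  have fin: "finite (Z \<inter> Em)" using arb_fin[OF a] by auto
  have "finite W \<Longrightarrow> W \<subseteq> Z \<inter> Em \<Longrightarrow> arb r ((Z - W) \<union> c ` W)" for W
  proof (induction W rule: finite_induct)
    case empty then show ?case using a by simp
  next
    case (insert x W)
    note 3 = insert
    let ?Q = "(Z - W) \<union> c ` W"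
    have aQ: "arb r ?Q" using 3 by auto
    have xQ: "x \<in> ?Q" using 3 by auto
    have xnc: "x \<notin> c ` W"
    proof
      assume "x \<in> c ` W"
      then obtain w where w: "w \<in> W" "x = c w" by auto
      have wZ: "w \<in> Z \<inter> Em" using w 3 by auto
      show False
      proof (cases "c w = w")
        case True then show False using w 3 by auto
      next
        case False
        then have "c w \<in> Ep" using c_props(5)[OF c wZ] muEp wZ by auto
        then show False using w 3 EpEm by auto
      qed
    qed
    have eq: "(Z - insert x W) \<union> c ` insert x W = ?Q - {x} \<union> {c x}" using xnc by auto
    show ?case
    proof (cases "c x = x")
      case True
      then have "?Q - {x} \<union> {c x} = ?Q" using xQ by auto
      then show ?thesis using eq aQ by simp
    next
      case False
      have "c x \<in> mu x" using c_props(5)[OF c] 3 False by auto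
      then have "arb r (?Q - {x} \<union> {c x})" using repl_one[OF aQ xQ] 3 by auto
      then show ?thesis using eq by simp
    qed
  qed
  then have "arb r ((Z - (Z \<inter> Em)) \<union> c ` (Z \<inter> Em))" using fin by blast
  moreover have "Exp Z c = (Z - (Z \<inter> Em)) \<union> c ` (Z \<inter> Em)" unfolding Exp_def by auto
  ultimately show ?thesis by simp
qed

lemma exp_disj: assumes f: "func r Z" and c: "c \<in> Pc Z"
  shows "(Z - Em) \<inter> c ` (Z \<inter> Em) = {}" "inj_on c (Z \<inter> Em)"
proof -
  have u: "\<forall>e1\<in>Z. \<forall>e2\<in>Z. s e1 = s e2 \<longrightarrow> e1 = e2" using f unfolding func_def by auto
  show "(Z - Em) \<inter> c ` (Z \<inter> Em) = {}"
  proof (rule ccontr)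
    assume "(Z - Em) \<inter> c ` (Z \<inter> Em) \<noteq> {}"
    then obtain e where e: "e \<in> Z \<inter> Em" "c e \<in> Z - Em" by auto
    then have "c e = e" using u c_props(2)[OF c e(1)] by auto
    then show False using e by auto
  qed
  show "inj_on c (Z \<inter> Em)" unfolding inj_on_def
  proof (intro ballI impI)
    fix x y assume xy: "x \<in> Z \<inter> Em" "y \<in> Z \<inter> Em" "c x = c y"
    then have "s x = s y" using c_props(2)[OF c xy(1)] c_props(2)[OF c xy(2)] by simp
    then show "x = y" using u xy by blast
  qed
qed

lemma sum_exp: assumes a: "arb r Z"
  shows "(\<Sum>c\<in>Pc Z. prod lab (Exp Z c)) = prod phi Z"
proof -
  have f: "func r Z" using a unfolding arb_def by auto
  have fin: "finite Z" using arb_fin[OF a] .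
  have "prod lab (Exp Z c) = prod lab (Z - Em) * (\<Prod>e\<in>Z \<inter> Em. lab (c e))" if c: "c \<in> Pc Z" for c
  proof -
    have "prod lab (Exp Z c) = prod lab (Z - Em) * prod lab (c ` (Z \<inter> Em))"
      unfolding Exp_def
    proof (rule prod.union_disjoint)
      show "finite (Z - Em)" using fin by simp
      show "finite (c ` (Z \<inter> Em))" using fin by simp
      show "(Z - Em) \<inter> c ` (Z \<inter> Em) = {}" by (rule exp_disj(1)[OF f c])
    qed
    also have "prod lab (c ` (Z \<inter> Em)) = (\<Prod>e\<in>Z \<inter> Em. lab (c e))"
      using prod.reindex[OF exp_disj(2)[OF f c]] by simp
    finally show ?thesis .
  qed
  then have "(\<Sum>c\<in>Pc Z. prod lab (Exp Z c)) = (\<Sum>c\<in>Pc Z. prod lab (Z - Em) * (\<Prod>e\<in>Z \<inter> Em. lab (c e)))"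
    by (rule sum.cong[OF refl])
  also have "\<dots> = prod lab (Z - Em) * (\<Sum>c\<in>Pc Z. \<Prod>e\<in>Z \<inter> Em. lab (c e))"
    by (rule sum_distrib_left[symmetric])
  also have "(\<Sum>c\<in>Pc Z. \<Prod>e\<in>Z \<inter> Em. lab (c e)) = (\<Prod>e\<in>Z \<inter> Em. \<Sum>x\<in>insert e (mu e). lab x)"
    unfolding Pc_def
  proof (rule prod_sum_PiE[symmetric])
    show "finite (Z \<inter> Em)" using fin by auto
    fix e assume "e \<in> Z \<inter> Em"
    then show "finite (insert e (mu e))" using fin_mu by simp
  qed
  also have "\<dots> = prod phi (Z \<inter> Em)"
  proof (rule prod.cong[OF refl])
    fix e assume e: "e \<in> Z \<inter> Em"
    have "e \<notin> mu e" using e muEp EpEm by auto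
    moreover have "finite (mu e)" using e fin_mu by simp
    ultimately show "(\<Sum>x\<in>insert e (mu e). lab x) = phi e" using e unfolding phi_def by simp
  qed
  also have "prod lab (Z - Em) = prod phi (Z - Em)" unfolding phi_def by (intro prod.cong) auto
  also have "prod phi (Z - Em) * prod phi (Z \<inter> Em) = prod phi Z"
    using prod.Int_Diff[OF fin, of phi Em] by (simp only: mult.commute)
  finally show ?thesis .
qed

end


context pg begin

lemma exp_repl: assumes f: "func r Z" and c: "c \<in> Pc Z"
  shows "c ` (Z \<inter> Em) - (Z \<inter> Em) \<subseteq> Exp Z c \<inter> IM" "repl (Exp Z c) (c ` (Z \<inter> Em) - (Z \<inter> Em)) = Z"
proof -
  let ?N = "Z \<inter> Em" let ?Y = "c ` ?N - ?N" let ?T = "Exp Z c"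
  have a: "\<And>e. e \<in> ?N \<Longrightarrow> c e \<in> ?N \<Longrightarrow> c e = e" using c_props(4)[OF c] by auto
  have b: "\<And>e. e \<in> ?N \<Longrightarrow> c e \<notin> ?N \<Longrightarrow> c e \<in> mu e \<and> ms (c e) = e"
  proof -
    fix e assume e: "e \<in> ?N" "c e \<notin> ?N"
    then have "c e \<noteq> e" by auto
    then have "c e \<in> mu e" using c_props(5)[OF c e(1)] by auto
    then show "c e \<in> mu e \<and> ms (c e) = e" using ms_eq e by auto
  qed
  have d: "(Z - Em) \<inter> c ` ?N = {}" using exp_disj(1)[OF f c] .
  show "?Y \<subseteq> ?T \<inter> IM"
  proof
    fix y assume "y \<in> ?Y"
    then obtain e where e: "e \<in> ?N" "y = c e" "c e \<notin> ?N" by auto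
    then have "y \<in> mu e" using b by auto
    then have "y \<in> IM" unfolding im_mu_def using e by auto
    moreover have "y \<in> ?T" unfolding Exp_def using e by auto
    ultimately show "y \<in> ?T \<inter> IM" by auto
  qed
  show "repl ?T ?Y = Z"
  proof
    show "repl ?T ?Y \<subseteq> Z"
    proof
      fix x assume "x \<in> repl ?T ?Y"
      then consider "x \<in> ?T" "x \<notin> ?Y" | y where "y \<in> ?Y" "x = ms y" unfolding repl_def by auto
      then show "x \<in> Z"
      proof cases
        case 1
        then show ?thesis unfolding Exp_def by auto
      next
        case 2
        then obtain e where "e \<in> ?N" "c e \<notin> ?N" "x = ms (c e)" by auto
        then show ?thesis using b by auto
      qed
    qed
    show "Z \<subseteq> repl ?T ?Y"
    proof
      fix x assume x: "x \<in> Z"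
      show "x \<in> repl ?T ?Y"
      proof (cases "x \<in> Em")
        case False
        then have "x \<in> ?T" "x \<notin> c ` ?N" using x d unfolding Exp_def by auto
        then show ?thesis unfolding repl_def by auto
      next
        case True
        then have xN: "x \<in> ?N" using x by auto
        show ?thesis
        proof (cases "c x = x")
          case True
          then have "x \<in> ?T" using xN unfolding Exp_def by force
          then show ?thesis using xN unfolding repl_def by auto
        next
          case False
          then have "c x \<notin> ?N" using a xN by auto
          then have "c x \<in> ?Y" "ms (c x) = x" using b xN by auto
          then show ?thesis unfolding repl_def by force
        qed
      qed
    qed
  qed
qed

lemma repl_repl: assumes "Y \<subseteq> IM" "X \<subseteq> IM" "X \<inter> Y = {}"
  shows "repl (repl T Y) X = repl T (Y \<union> X)"
proof -
  have "ms ` Y \<inter> X = {}" using assms ms_not_IM by auto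
  then show ?thesis unfolding repl_def using assms by auto
qed

lemma exp_inj:
  assumes r: "r \<in> nodes m" and Z1: "Z1 \<in> Lam r" and Z2: "Z2 \<in> Lam r"
    and c1: "c1 \<in> Pc Z1" and c2: "c2 \<in> Pc Z2" and eq: "Exp Z1 c1 = Exp Z2 c2"
  shows "Z1 = Z2 \<and> c1 = c2"
proof -
  have a1: "arb r Z1" and a2: "arb r Z2" using Z1 Z2 unfolding Lam_def by auto
  have f1: "func r Z1" and f2: "func r Z2" using a1 a2 unfolding arb_def by auto
  define T where "T = Exp Z1 c1"
  have aT: "arb r T" unfolding T_def by (rule exp_arb[OF a1 c1])
  define Y1 where "Y1 = c1 ` (Z1 \<inter> Em) - (Z1 \<inter> Em)"
  define Y2 where "Y2 = c2 ` (Z2 \<inter> Em) - (Z2 \<inter> Em)"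
  have Y1: "Y1 \<subseteq> T \<inter> IM" "repl T Y1 = Z1" unfolding T_def Y1_def by (rule exp_repl[OF f1 c1])+
  have Y2: "Y2 \<subseteq> T \<inter> IM" "repl T Y2 = Z2" unfolding T_def eq Y2_def by (rule exp_repl[OF f2 c2])+
  have au: "arb r (repl T (Y1 \<union> Y2))" using repl_union[OF aT Y1(1) Y2(1)] Y1(2) Y2(2) a1 a2 by simp
  have L1: "\<And>X. X \<subseteq> Z1 \<inter> IM \<Longrightarrow> arb r (repl Z1 X) \<Longrightarrow> X = {}" using Z1 unfolding Lam_def by blast
  have L2: "\<And>X. X \<subseteq> Z2 \<inter> IM \<Longrightarrow> arb r (repl Z2 X) \<Longrightarrow> X = {}" using Z2 unfolding Lam_def by blast
  have sub1: "T - Y1 \<subseteq> Z1" using Y1(2) unfolding repl_def by blast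
  have sub2: "T - Y2 \<subseteq> Z2" using Y2(2) unfolding repl_def by blast
  have "Y2 - Y1 = {}"
  proof (rule L1)
    have "repl (repl T Y1) (Y2 - Y1) = repl T (Y1 \<union> (Y2 - Y1))" by (rule repl_repl) (use Y1 Y2 in auto)
    then show "arb r (repl Z1 (Y2 - Y1))" using Y1(2) au by (simp add: Un_Diff_cancel)
    show "Y2 - Y1 \<subseteq> Z1 \<inter> IM" using Y2(1) sub1 by blast
  qed
  moreover have "Y1 - Y2 = {}"
  proof (rule L2)
    have "repl (repl T Y2) (Y1 - Y2) = repl T (Y2 \<union> (Y1 - Y2))" by (rule repl_repl) (use Y1 Y2 in auto)
    then show "arb r (repl Z2 (Y1 - Y2))" using Y2(2) au by (simp add: Un_Diff_cancel Un_commute)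
    show "Y1 - Y2 \<subseteq> Z2 \<inter> IM" using Y1(1) sub2 by blast
  qed
  ultimately have "Y1 = Y2" by auto
  then have Z: "Z1 = Z2" using Y1 Y2 by simp
  have fT: "func r T" using aT unfolding arb_def by auto
  have uT: "\<forall>e1\<in>T. \<forall>e2\<in>T. s e1 = s e2 \<longrightarrow> e1 = e2" using fT unfolding func_def by auto
  have "c1 = c2"
  proof (rule PiE_ext)
    show "c1 \<in> PiE (Z1 \<inter> Em) (\<lambda>e. insert e (mu e))" using c1 unfolding Pc_def .
    show "c2 \<in> PiE (Z1 \<inter> Em) (\<lambda>e. insert e (mu e))" using c2 Z unfolding Pc_def by simp
    fix e assume e: "e \<in> Z1 \<inter> Em"
    have "c1 e \<in> T" unfolding T_def Exp_def using e by auto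
    moreover have "c2 e \<in> Exp Z2 c2" unfolding Exp_def using e Z by auto
    then have "c2 e \<in> T" unfolding T_def eq .
    moreover have "s (c1 e) = s (c2 e)" using c_props(2)[OF c1 e] c_props(2)[OF c2] e Z by auto
    ultimately show "c1 e = c2 e" using uT by blast
  qed
  then show ?thesis using Z by simp
qed

lemma exp_surj:
  assumes r: "r \<in> nodes m" and aT: "arb r T"
  shows "\<exists>Z\<in>Lam r. \<exists>c\<in>Pc Z. T = Exp Z c"
proof -
  have fT: "func r T" using aT unfolding arb_def by auto
  have hT: "hasout r T" using fT unfolding func_def by auto
  have finT: "finite T" using arb_fin[OF aT] .
  define FF where "FF = {Y. Y \<subseteq> T \<inter> IM \<and> arb r (repl T Y)}"
  have "FF \<subseteq> Pow T" unfolding FF_def by auto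
  then have finFF: "finite FF" using finT by (simp add: finite_subset)
  have "{} \<in> FF" unfolding FF_def using aT repl_empty by simp
  then obtain Y where Y: "Y \<in> FF" "\<forall>Y'\<in>FF. Y \<subseteq> Y' \<longrightarrow> Y = Y'"
    using finite_has_maximal2[OF finFF] by blast
  have YT: "Y \<subseteq> T \<inter> IM" and aZ: "arb r (repl T Y)" using Y unfolding FF_def by auto
  define Z where "Z = repl T Y"
  have fZ: "func r Z" using aZ unfolding Z_def arb_def by auto
  have ZL: "Z \<in> Lam r" unfolding Lam_def
  proof (intro CollectI conjI allI impI)
    show "arb r Z" using aZ unfolding Z_def .
    fix X assume X: "X \<subseteq> Z \<inter> IM" and aX: "arb r (repl Z X)"
    have XY: "X \<inter> Y = {}"
    proof (rule ccontr)
      assume "X \<inter> Y \<noteq> {}"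
      then obtain x where x: "x \<in> X" "x \<in> Y" by auto
      then have "x \<in> ms ` Y" "x \<in> IM" using X unfolding Z_def repl_def by auto
      then show False using ms_not_IM YT by auto
    qed
    have XT: "X \<subseteq> T"
    proof
      fix x assume x: "x \<in> X"
      have xIM: "x \<in> IM" using x X by auto
      have "x \<notin> ms ` Y"
      proof
        assume "x \<in> ms ` Y"
        then obtain y where y: "y \<in> Y" "x = ms y" by auto
        then have "y \<in> IM" using YT by auto
        then show False using ms_not_IM[of y] xIM y by auto
      qed
      then show "x \<in> T" using x X unfolding Z_def repl_def by auto
    qed
    have "repl Z X = repl T (Y \<union> X)" unfolding Z_def using repl_repl[of Y X T] YT X XY by auto
    then have "Y \<union> X \<in> FF" unfolding FF_def using aX X XT YT by auto
    then have "Y = Y \<union> X" using Y(2) by blast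
    then show "X = {}" using XY by auto
  qed
  define c where "c = (\<lambda>e\<in>Z \<inter> Em. out T (s e))"
  have outT: "\<And>y. y \<in> T \<Longrightarrow> out T (s y) = y" using out_eq[OF fT] by auto
  have msY: "\<And>y. y \<in> Y \<Longrightarrow> ms y \<in> Em \<and> y \<in> mu (ms y) \<and> s (ms y) = s y" using ms_props YT by auto
  have cPc: "c \<in> Pc Z" unfolding Pc_def
  proof (rule PiE_I)
    fix e assume e: "e \<in> Z \<inter> Em"
    then consider "e \<in> T" | y where "y \<in> Y" "e = ms y" unfolding Z_def repl_def by auto
    then show "c e \<in> insert e (mu e)"
    proof cases
      case 1 then show ?thesis unfolding c_def using e outT by auto
    next
      case 2 then show ?thesis unfolding c_def using e outT msY YT by auto
    qed
  next
    fix e assume "e \<notin> Z \<inter> Em" then show "c e = undefined" unfolding c_def by auto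
  qed
  have "T = Exp Z c"
  proof
    show "T \<subseteq> Exp Z c"
    proof
      fix x assume x: "x \<in> T"
      show "x \<in> Exp Z c"
      proof (cases "x \<in> Y")
        case True
        then have "ms x \<in> Z \<inter> Em" using msY unfolding Z_def repl_def by auto
        moreover have "c (ms x) = x" using calculation unfolding c_def using msY True outT x by auto
        ultimately show ?thesis unfolding Exp_def by force
      next
        case False
        then have xZ: "x \<in> Z" using x unfolding Z_def repl_def by auto
        show ?thesis
        proof (cases "x \<in> Em")
          case True
          then have "c x = x" using xZ outT x unfolding c_def by auto
          then show ?thesis using xZ True unfolding Exp_def by force
        next
          case False then show ?thesis using xZ unfolding Exp_def by auto
        qed
      qed
    qed
    show "Exp Z c \<subseteq> T"
    proof
      fix x assume "x \<in> Exp Z c"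
      then consider "x \<in> Z - Em" | e where "e \<in> Z \<inter> Em" "x = c e" unfolding Exp_def by auto
      then show "x \<in> T"
      proof cases
        case 1 then show ?thesis using msY unfolding Z_def repl_def by auto
      next
        case 2
        have "e \<in> Z" "Z \<subseteq> E" using 2 fZ unfolding func_def hasout_def by auto
        then have "s e \<in> nodes m" "s e \<noteq> r" using sE fZ unfolding func_def hasout_def by auto
        then show ?thesis using out_in(1)[OF hT] 2 unfolding c_def by auto
      qed
    qed
  qed
  then show ?thesis using ZL cPc by blast
qed

lemma ups_eq: assumes r: "r \<in> nodes m"
  shows "Upsilon m E s t lab r = (\<Sum>Z\<in>Lam r. prod phi Z)"
proof -
  have finL: "finite (Lam r)" using finite_subset[OF _ finite_arbs[of r]] unfolding Lam_def by auto
  have finP: "finite (Pc Z)" if "Z \<in> Lam r" for Z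
  proof -
    have "finite Z" using that arb_fin unfolding Lam_def by auto
    then show ?thesis unfolding Pc_def using fin_mu by (intro finite_PiE) auto
  qed
  have "(\<Sum>Z\<in>Lam r. prod phi Z) = (\<Sum>Z\<in>Lam r. \<Sum>c\<in>Pc Z. prod lab (Exp Z c))"
    using sum_exp unfolding Lam_def by (intro sum.cong) auto
  also have "\<dots> = (\<Sum>p\<in>Sigma (Lam r) Pc. prod lab (Exp (fst p) (snd p)))"
    using sum.Sigma[OF finL, of Pc "\<lambda>Z c. prod lab (Exp Z c)"] finP by (simp add: case_prod_beta')
  also have "\<dots> = (\<Sum>T\<in>{T. arb r T}. prod lab T)"
  proof (rule sum.reindex_bij_betw[of "\<lambda>p. Exp (fst p) (snd p)"])
    show "bij_betw (\<lambda>p. Exp (fst p) (snd p)) (Sigma (Lam r) Pc) {T. arb r T}"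
      unfolding bij_betw_def
    proof
      show "inj_on (\<lambda>p. Exp (fst p) (snd p)) (Sigma (Lam r) Pc)"
        unfolding inj_on_def using exp_inj[OF r] by auto
      show "(\<lambda>p. Exp (fst p) (snd p)) ` Sigma (Lam r) Pc = {T. arb r T}"
      proof
        show "(\<lambda>p. Exp (fst p) (snd p)) ` Sigma (Lam r) Pc \<subseteq> {T. arb r T}"
          using exp_arb unfolding Lam_def by auto
        show "{T. arb r T} \<subseteq> (\<lambda>p. Exp (fst p) (snd p)) ` Sigma (Lam r) Pc"
        proof
          fix T assume "T \<in> {T. arb r T}"
          then obtain Z c where "Z \<in> Lam r" "c \<in> Pc Z" "T = Exp Z c" using exp_surj[OF r] by blast
          then show "T \<in> (\<lambda>p. Exp (fst p) (snd p)) ` Sigma (Lam r) Pc" by force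
        qed
      qed
    qed
  qed
  also have "\<dots> = Upsilon m E s t lab r" by (rule ups_arb[OF r, symmetric])
  finally show ?thesis by simp
qed

lemma part1:
  assumes m1: "m \<ge> 1" and r: "r \<in> nodes m"
  shows "Upsilon m E s t lab r \<noteq> 0 \<longleftrightarrow> (\<exists>\<tau>\<in>Lam r. \<forall>e\<in>\<tau> \<inter> Em. 0 < lab e + (\<Sum>e'\<in>mu e. lab e'))"
proof -
  have finL: "finite (Lam r)" using finite_subset[OF _ finite_arbs[of r]] unfolding Lam_def by auto
  have ZE: "Z \<subseteq> E" if "Z \<in> Lam r" for Z using that unfolding Lam_def arb_def func_def hasout_def by auto
  have phinn: "0 \<le> phi e" if "e \<in> E" for e
  proof (cases "e \<in> Em")
    case True then show ?thesis using nonneg unfolding phi_def by auto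
  next
    case False
    then have "e \<in> Ep" using that EpEm by auto
    then show ?thesis using False unfolding phi_def Eplus_def by auto
  qed
  have Wnn: "0 \<le> prod phi Z" if "Z \<in> Lam r" for Z
  proof (rule prod_nonneg_ne)
    show "finite Z" using that arb_fin unfolding Lam_def by auto
    show "Z \<noteq> {}" using that arb_ne[OF m1 r] unfolding Lam_def by auto
    show "\<And>a. a \<in> Z \<Longrightarrow> 0 \<le> phi a" using phinn ZE that by auto
  qed
  show ?thesis
  proof
    assume "Upsilon m E s t lab r \<noteq> 0"
    then have "(\<Sum>Z\<in>Lam r. prod phi Z) \<noteq> 0" using ups_eq[OF r] by simp
    then obtain Z where Z: "Z \<in> Lam r" "prod phi Z \<noteq> 0" using sum.not_neutral_contains_not_neutral by blast
    have "\<forall>e\<in>Z \<inter> Em. 0 < lab e + (\<Sum>e'\<in>mu e. lab e')"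
    proof
      fix e assume e: "e \<in> Z \<inter> Em"
      have "phi e \<noteq> 0"
      proof
        assume "phi e = 0"
        then have "prod phi Z = 0" using e arb_fin Z unfolding Lam_def by (intro prod_zero) auto
        then show False using Z by simp
      qed
      moreover have "0 \<le> phi e" using phinn ZE Z e by auto
      ultimately have "0 < phi e" by (simp add: order.not_eq_order_implies_strict)
      then show "0 < lab e + (\<Sum>e'\<in>mu e. lab e')" using e unfolding phi_def by simp
    qed
    then show "\<exists>\<tau>\<in>Lam r. \<forall>e\<in>\<tau> \<inter> Em. 0 < lab e + (\<Sum>e'\<in>mu e. lab e')" using Z by blast
  next
    assume "\<exists>\<tau>\<in>Lam r. \<forall>e\<in>\<tau> \<inter> Em. 0 < lab e + (\<Sum>e'\<in>mu e. lab e')"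
    then obtain Z where Z: "Z \<in> Lam r" "\<forall>e\<in>Z \<inter> Em. 0 < lab e + (\<Sum>e'\<in>mu e. lab e')" by blast
    have pos: "0 < prod phi Z"
    proof (rule prod_pos_ne)
      show "finite Z" using Z arb_fin unfolding Lam_def by auto
      show "Z \<noteq> {}" using Z arb_ne[OF m1 r] unfolding Lam_def by auto
      fix e assume e: "e \<in> Z"
      show "0 < phi e"
      proof (cases "e \<in> Em")
        case True then show ?thesis using Z e unfolding phi_def by auto
      next
        case False
        then have "e \<in> Ep" using ZE Z e EpEm by auto
        then show ?thesis using False unfolding phi_def Eplus_def by auto
      qed
    qed
    have "(\<Sum>Z\<in>Lam r. prod phi Z) = prod phi Z + (\<Sum>Z'\<in>Lam r - {Z}. prod phi Z')"
      using sum.remove[OF finL Z(1)] .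
    moreover have "0 \<le> (\<Sum>Z'\<in>Lam r - {Z}. prod phi Z')" using Wnn by (intro sum_nonneg) auto
    ultimately have "0 < (\<Sum>Z\<in>Lam r. prod phi Z)" using pos add_pos_nonneg by simp
    then show "Upsilon m E s t lab r \<noteq> 0" using ups_eq[OF r] by simp
  qed
qed

end


lemma sum_rotate:
  fixes n :: nat
  assumes "0 < n" shows "(\<Sum>k<n. g ((k + 1) mod n)) = (\<Sum>k<n. g k)"
proof -
  obtain q where n: "n = Suc q" using assms by (cases n) auto
  have "(\<Sum>k<n. g ((k + 1) mod n)) = (\<Sum>k<q. g ((k + 1) mod n)) + g ((q + 1) mod n)"
    unfolding n by (rule sum.lessThan_Suc)
  also have "(\<Sum>k<q. g ((k + 1) mod n)) = (\<Sum>k<q. g (Suc k))" unfolding n by (intro sum.cong) auto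
  also have "g ((q + 1) mod n) = g 0" unfolding n by simp
  also have "(\<Sum>k<q. g (Suc k)) + g 0 = (\<Sum>k<Suc q. g k)" by (metis add.commute sum.lessThan_Suc_shift)
  finally show ?thesis unfolding n .
qed

lemma sum_set_nth: assumes "distinct xs" shows "sum h (set xs) = (\<Sum>k<length xs. h (xs!k))"
proof -
  have "set xs = (\<lambda>k. xs!k) ` {..<length xs}" by (auto simp: in_set_conv_nth)
  moreover have "inj_on (\<lambda>k. xs!k) {..<length xs}" using assms by (auto simp: inj_on_def nth_eq_iff_index_eq)
  ultimately show ?thesis by (simp add: sum.reindex)
qed

context mdg begin

lemma dcycle_sum: assumes C: "dcycle E s t C"
  shows "(\<Sum>e\<in>set C. g (t e)) = (\<Sum>e\<in>set C. g (s e))"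
proof -
  have d: "distinct C" using C unfolding dcycle_def by (metis distinct_map)
  have n: "0 < length C" using C unfolding dcycle_def by auto
  have "(\<Sum>e\<in>set C. g (t e)) = (\<Sum>k<length C. g (t (C!k)))" by (rule sum_set_nth[OF d])
  also have "\<dots> = (\<Sum>k<length C. g (s (C!((k+1) mod length C))))"
    using C unfolding dcycle_def by (intro sum.cong) auto
  also have "\<dots> = (\<Sum>k<length C. g (s (C!k)))" by (rule sum_rotate[OF n, of "\<lambda>k. g (s (C!k))"])
  also have "\<dots> = (\<Sum>e\<in>set C. g (s e))" by (rule sum_set_nth[OF d, symmetric])
  finally show ?thesis .
qed

definition outs :: "nat \<Rightarrow> 'e set" where "outs j = {e\<in>E. s e = j + 1}"

definition cf :: "'e \<Rightarrow> nat \<Rightarrow> nat \<Rightarrow> 'a::comm_ring_1" where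
  "cf e i j = (if t e = i + 1 then 1 else 0) - (if i = j then 1 else 0)"

lemma fin_outs: "finite (outs j)" unfolding outs_def using finE by auto

lemma lap_expand:
  fixes lab :: "'e \<Rightarrow> 'a::comm_ring_1"
  assumes i: "i < m" and j: "j < m"
  shows "laplacian m E s t lab (i+1) (j+1) = (\<Sum>e\<in>outs j. lab e * cf e i j)"
proof (cases "i = j")
  case False
  have se: "{e\<in>E. s e = j+1 \<and> t e = i+1} = {e\<in>outs j. t e = i + 1}" unfolding outs_def by auto
  have "laplacian m E s t lab (i+1) (j+1) = (\<Sum>e\<in>{e\<in>outs j. t e = i + 1}. lab e)"
    unfolding laplacian_def lap_off_def using False se by simp
  also have "\<dots> = (\<Sum>e\<in>outs j. if t e = i + 1 then lab e else 0)"
    by (rule sum.inter_filter[OF fin_outs])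
  also have "\<dots> = (\<Sum>e\<in>outs j. lab e * cf e i j)"
    unfolding cf_def using False by (intro sum.cong) auto
  finally show ?thesis .
next
  case True
  have nd: "nodes m - {j+1} = nodes m - {j+1}" ..
  have "(\<Sum>k\<in>nodes m - {j+1}. lap_off E s t lab k (j+1))
      = (\<Sum>k\<in>nodes m - {j+1}. sum lab {e\<in>outs j. t e = k})"
    unfolding lap_off_def outs_def by (intro sum.cong refl arg_cong2[where f=sum]) auto
  also have "\<dots> = sum lab (outs j)"
  proof (rule sum.group)
    show "finite (outs j)" by (rule fin_outs)
    show "finite (nodes m - {j+1})" using fin_nodes by auto
    show "t ` outs j \<subseteq> nodes m - {j+1}" unfolding outs_def using tE stE by fastforce
  qed
  finally have "laplacian m E s t lab (i+1) (j+1) = - sum lab (outs j)"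
    unfolding laplacian_def using True by simp
  also have "\<dots> = (\<Sum>e\<in>outs j. lab e * cf e i j)"
    unfolding sum_negf[symmetric]
  proof (rule sum.cong[OF refl])
    fix e assume "e \<in> outs j"
    then have "t e \<noteq> j + 1" using stE unfolding outs_def by fastforce
    then show "- lab e = lab e * cf e i j" unfolding cf_def using True by simp
  qed
  finally show ?thesis .
qed

end


context mdg begin

definition Mf :: "(nat \<Rightarrow> 'e) \<Rightarrow> 'a::comm_ring_1 mat" where
  "Mf f = mat m m (\<lambda>(i,j). cf (f j) i j)"

abbreviation "PF \<equiv> PiE {..<m} outs"

lemma det_expand:
  fixes lab :: "'e \<Rightarrow> 'a::comm_ring_1"
  assumes A: "A \<in> carrier_mat m m"
    and Ae: "\<And>i j. i < m \<Longrightarrow> j < m \<Longrightarrow> A $$ (i,j) = (\<Sum>e\<in>outs j. lab e * cf e i j)"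
  shows "det A = (\<Sum>f\<in>PF. (\<Prod>j<m. lab (f j)) * det (Mf f :: 'a mat))"
proof -
  let ?P = "{p. p permutes {0..<m}}"
  have pj: "p j < m" if "p permutes {0..<m}" "j < m" for p j
    using permutes_in_image[OF that(1), of j] that(2) by auto
  have "det A = (\<Sum>p\<in>?P. signof p * (\<Prod>j<m. A $$ (p j, j)))" by (rule det_col[OF A])
  also have "\<dots> = (\<Sum>p\<in>?P. signof p * (\<Sum>f\<in>PF. (\<Prod>j<m. lab (f j)) * (\<Prod>j<m. cf (f j) (p j) j)))"
  proof (rule sum.cong[OF refl])
    fix p assume p: "p \<in> ?P"
    have "(\<Prod>j<m. A $$ (p j, j)) = (\<Prod>j<m. \<Sum>e\<in>outs j. lab e * cf e (p j) j)"
      using Ae pj p by (intro prod.cong) auto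
    also have "\<dots> = (\<Sum>f\<in>PF. \<Prod>j<m. lab (f j) * cf (f j) (p j) j)"
      by (rule prod_sum_PiE) (auto simp: fin_outs)
    also have "\<dots> = (\<Sum>f\<in>PF. (\<Prod>j<m. lab (f j)) * (\<Prod>j<m. cf (f j) (p j) j))"
      by (simp add: prod.distrib)
    finally show "signof p * (\<Prod>j<m. A $$ (p j, j)) = signof p * (\<Sum>f\<in>PF. (\<Prod>j<m. lab (f j)) * (\<Prod>j<m. cf (f j) (p j) j))"
      by simp
  qed
  also have "\<dots> = (\<Sum>p\<in>?P. \<Sum>f\<in>PF. (\<Prod>j<m. lab (f j)) * (signof p * (\<Prod>j<m. cf (f j) (p j) j)))"
    by (simp add: sum_distrib_left mult.left_commute)
  also have "\<dots> = (\<Sum>f\<in>PF. \<Sum>p\<in>?P. (\<Prod>j<m. lab (f j)) * (signof p * (\<Prod>j<m. cf (f j) (p j) j)))"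
    by (rule sum.swap)
  also have "\<dots> = (\<Sum>f\<in>PF. (\<Prod>j<m. lab (f j)) * det (Mf f :: 'a mat))"
  proof (rule sum.cong[OF refl])
    fix f assume f: "f \<in> PF"
    have Mc: "(Mf f :: 'a mat) \<in> carrier_mat m m" unfolding Mf_def by simp
    have "det (Mf f :: 'a mat) = (\<Sum>p\<in>?P. signof p * (\<Prod>j<m. (Mf f :: 'a mat) $$ (p j, j)))" by (rule det_col[OF Mc])
    also have "\<dots> = (\<Sum>p\<in>?P. signof p * (\<Prod>j<m. cf (f j) (p j) j))"
      unfolding Mf_def using pj by (intro sum.cong refl arg_cong2[where f="(*)"] prod.cong) auto
    finally show "(\<Sum>p\<in>?P. (\<Prod>j<m. lab (f j)) * (signof p * (\<Prod>j<m. cf (f j) (p j) j))) = (\<Prod>j<m. lab (f j)) * det (Mf f :: 'a mat)"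
      by (simp add: sum_distrib_left)
  qed
  finally show ?thesis .
qed

lemma PF_props: assumes f: "f \<in> PF" and j: "j < m"
  shows "f j \<in> E" "s (f j) = j + 1"
  using f j unfolding outs_def by auto

lemma PF_func: assumes f: "f \<in> PF"
  shows "func (m+1) (f ` {..<m})" "\<And>j. j < m \<Longrightarrow> succ (f ` {..<m}) (j+1) = t (f j)"
proof -
  have h: "hasout (m+1) (f ` {..<m})" unfolding hasout_def
  proof (intro conjI ballI impI)
    show "f ` {..<m} \<subseteq> E" using PF_props[OF f] by auto
    fix v assume v: "v \<in> nodes m" "v \<noteq> m + 1"
    then have "v - 1 < m" "v = (v - 1) + 1" unfolding nodes_def by auto
    then show "\<exists>e\<in>f ` {..<m}. s e = v" using PF_props(2)[OF f] by (metis imageI lessThan_iff)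
  next
    fix e assume "e \<in> f ` {..<m}" then show "s e \<noteq> m + 1" using PF_props(2)[OF f] by auto
  qed
  moreover have "\<forall>e1\<in>f ` {..<m}. \<forall>e2\<in>f ` {..<m}. s e1 = s e2 \<longrightarrow> e1 = e2"
    using PF_props(2)[OF f] by auto
  ultimately show fF: "func (m+1) (f ` {..<m})" unfolding func_def by auto
  fix j assume "j < m"
  then have "succ (f ` {..<m}) (s (f j)) = t (f j)" using succ_eq[OF fF] by auto
  then show "succ (f ` {..<m}) (j+1) = t (f j)" using PF_props(2)[OF f \<open>j < m\<close>] by simp
qed

lemma det_Mf_reach:
  assumes f: "f \<in> PF" and re: "reach (m+1) (f ` {..<m})"
  shows "det (Mf f :: 'a::comm_ring_1 mat) = (-1) ^ m"
proof -
  let ?F = "f ` {..<m}"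
  let ?P = "{p. p permutes {0..<m}}"
  have sc: "\<And>j. j < m \<Longrightarrow> succ ?F (j+1) = t (f j)" using PF_func(2)[OF f] .
  have Mc: "(Mf f :: 'a mat) \<in> carrier_mat m m" unfolding Mf_def by simp
  have pj: "p j < m" if "p permutes {0..<m}" "j < m" for p j
    using permutes_in_image[OF that(1), of j] that(2) by auto
  have tne: "t (f j) \<noteq> j + 1" if "j < m" for j using PF_props[OF f that] stE by metis
  have zero: "(\<Prod>j<m. cf (f j) (p j) j :: 'a) = 0" if p: "p permutes {0..<m}" "p \<noteq> id" for p
  proof (rule ccontr)
    assume nz: "(\<Prod>j<m. cf (f j) (p j) j :: 'a) \<noteq> 0"
    have key: "t (f j) = p j + 1" if "j < m" "p j \<noteq> j" for j
    proof (rule ccontr)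
      assume "t (f j) \<noteq> p j + 1"
      then have "cf (f j) (p j) j = (0::'a)" unfolding cf_def using that by simp
      then have "(\<Prod>j<m. cf (f j) (p j) j :: 'a) = 0" using that by (intro prod_zero) auto
      then show False using nz by simp
    qed
    obtain j0 where j0: "p j0 \<noteq> j0" using p(2) by (meson eq_id_iff)
    have j0m: "j0 < m" using permutes_not_in[OF p(1), of j0] j0 by auto
    have "\<exists>j<m. (succ ?F ^^ k) (j0+1) = j + 1 \<and> p j \<noteq> j" for k
    proof (induction k)
      case 0 then show ?case using j0 j0m by auto
    next
      case (Suc k)
      then obtain j where j: "j < m" "(succ ?F ^^ k) (j0+1) = j + 1" "p j \<noteq> j" by auto
      have "(succ ?F ^^ Suc k) (j0+1) = p j + 1" using j sc key by simp
      moreover have "p (p j) \<noteq> p j"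
      proof
        assume "p (p j) = p j"
        then have "p j = j" using permutes_inj[OF p(1)] by (simp add: inj_eq)
        then show False using j by simp
      qed
      ultimately show ?case using pj[OF p(1) j(1)] by blast
    qed
    moreover have "j0 + 1 \<in> nodes m" using j0m unfolding nodes_def by auto
    ultimately show False using re unfolding reach_def by (metis add_right_cancel less_irrefl)
  qed
  have "det (Mf f :: 'a mat) = (\<Sum>p\<in>?P. signof p * (\<Prod>j<m. (Mf f :: 'a mat) $$ (p j, j)))" by (rule det_col[OF Mc])
  also have "\<dots> = (\<Sum>p\<in>?P. signof p * (\<Prod>j<m. cf (f j) (p j) j))"
    unfolding Mf_def using pj by (intro sum.cong refl arg_cong2[where f="(*)"] prod.cong) auto
  also have "\<dots> = signof id * (\<Prod>j<m. cf (f j) (id j) j :: 'a) + (\<Sum>p\<in>?P - {id}. signof p * (\<Prod>j<m. cf (f j) (p j) j))"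
    by (rule sum.remove) (auto simp: finite_permutations permutes_id)
  also have "(\<Sum>p\<in>?P - {id}. signof p * (\<Prod>j<m. cf (f j) (p j) j) :: 'a) = 0"
    using zero by (intro sum.neutral) auto
  also have "(\<Prod>j<m. cf (f j) (id j) j :: 'a) = (\<Prod>j<m. -1)"
    using tne unfolding cf_def by (intro prod.cong) auto
  finally show ?thesis by simp
qed

end


context mdg begin

lemma det_Mf_noreach:
  assumes f: "f \<in> PF" and nre: "\<not> reach (m+1) (f ` {..<m})"
  shows "det (Mf f :: 'a::comm_ring_1 mat) = 0"
proof -
  let ?F = "f ` {..<m}"
  let ?M = "Mf f :: 'a mat"
  have fF: "func (m+1) ?F" using PF_func(1)[OF f] .
  have h: "hasout (m+1) ?F" using fF unfolding func_def by auto
  obtain C where C: "dcycle E s t C" "set C \<subseteq> ?F" using not_reach_dcycle[OF h nre] by blast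
  let ?S = "s ` set C"
  define v where "v = vec m (\<lambda>j. if j + 1 \<in> ?S then 1 else (0::'a))"
  have Mc: "?M \<in> carrier_mat m m" unfolding Mf_def by simp
  have vc: "v \<in> carrier_vec m" unfolding v_def by simp
  have Cf: "\<And>e. e \<in> set C \<Longrightarrow> \<exists>j<m. e = f j" using C(2) by auto
  have sC: "\<And>e. e \<in> set C \<Longrightarrow> s e - 1 < m \<and> f (s e - 1) = e \<and> s e = (s e - 1) + 1"
  proof -
    fix e assume "e \<in> set C"
    then obtain j where "j < m" "e = f j" using Cf by blast
    then show "s e - 1 < m \<and> f (s e - 1) = e \<and> s e = (s e - 1) + 1" using PF_props(2)[OF f] by auto
  qed
  have Mv: "(?M *\<^sub>v v) $ i = 0" if i: "i < m" for i
  proof -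
    have "(?M *\<^sub>v v) $ i = (\<Sum>j\<in>{0..<m}. cf (f j) i j * v $ j)"
      using i unfolding Mf_def v_def by (simp add: scalar_prod_def)
    also have "\<dots> = (\<Sum>j\<in>{0..<m}. if j + 1 \<in> ?S then cf (f j) i j else 0)"
      unfolding v_def by (intro sum.cong) auto
    also have "\<dots> = (\<Sum>j\<in>{j\<in>{0..<m}. j + 1 \<in> ?S}. cf (f j) i j)"
      by (rule sum.inter_filter[symmetric]) simp
    also have "{j\<in>{0..<m}. j + 1 \<in> ?S} = (\<lambda>e. s e - 1) ` set C"
    proof
      show "{j\<in>{0..<m}. j + 1 \<in> ?S} \<subseteq> (\<lambda>e. s e - 1) ` set C" by force
      show "(\<lambda>e. s e - 1) ` set C \<subseteq> {j\<in>{0..<m}. j + 1 \<in> ?S}" using sC by force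
    qed
    also have "(\<Sum>j\<in>(\<lambda>e. s e - 1) ` set C. cf (f j) i j) = (\<Sum>e\<in>set C. cf (f (s e - 1)) i (s e - 1))"
    proof -
      have "inj_on (\<lambda>e. s e - 1) (set C)" unfolding inj_on_def using sC by metis
      from sum.reindex[OF this, of "\<lambda>j. cf (f j) i j"] show ?thesis by (simp add: comp_def)
    qed
    also have "\<dots> = (\<Sum>e\<in>set C. (if t e = i + 1 then 1 else 0) - (if s e = i + 1 then 1 else 0))"
    proof (rule sum.cong[OF refl])
      fix e assume e: "e \<in> set C"
      then have "(i = s e - 1) = (s e = i + 1)" using sC by auto
      then show "cf (f (s e - 1)) i (s e - 1) = (if t e = i + 1 then 1 else 0) - (if s e = i + 1 then 1 else 0)"
        unfolding cf_def using sC[OF e] by simp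
    qed
    also have "\<dots> = (\<Sum>e\<in>set C. (if t e = i + 1 then 1 else 0)) - (\<Sum>e\<in>set C. (if s e = i + 1 then 1 else (0::'a)))"
      by (rule sum_subtractf)
    also have "\<dots> = 0" using dcycle_sum[OF C(1), of "\<lambda>v. if v = i + 1 then 1 else (0::'a)"] by simp
    finally show ?thesis .
  qed
  have Mv0: "?M *\<^sub>v v = 0\<^sub>v m" by (rule eq_vecI) (use Mv Mc in auto)
  obtain e0 where e0: "e0 \<in> set C" using C(1) unfolding dcycle_def by (cases C) auto
  define x where "x = s e0 - 1"
  have xm: "x < m" and vx: "v $ x = 1" using sC[OF e0] e0 unfolding x_def v_def by auto
  have adj: "adj_mat ?M * ?M = det ?M \<cdot>\<^sub>m 1\<^sub>m m" using adj_mat(3)[OF Mc] .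
  have ac: "adj_mat ?M \<in> carrier_mat m m" using adj_mat(1)[OF Mc] .
  have "((adj_mat ?M * ?M) *\<^sub>v v) $ x = (adj_mat ?M *\<^sub>v (?M *\<^sub>v v)) $ x"
    using assoc_mult_mat_vec[OF ac Mc vc] by simp
  also have "\<dots> = 0" unfolding Mv0 using ac xm by simp
  finally have "((det ?M \<cdot>\<^sub>m 1\<^sub>m m) *\<^sub>v v) $ x = 0" unfolding adj .
  moreover have "((det ?M \<cdot>\<^sub>m 1\<^sub>m m) *\<^sub>v v) $ x = det ?M * v $ x" using xm vc by simp
  ultimately show ?thesis using vx by simp
qed

lemma det_ups:
  fixes lab :: "'e \<Rightarrow> 'a::comm_ring_1"
  assumes A: "A \<in> carrier_mat m m"
    and Ae: "\<And>i j. i < m \<Longrightarrow> j < m \<Longrightarrow> A $$ (i,j) = laplacian m E s t lab (i+1) (j+1)"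
  shows "det A = (-1) ^ m * Upsilon m E s t lab (m+1)"
proof -
  have Ae': "A $$ (i,j) = (\<Sum>e\<in>outs j. lab e * cf e i j)" if "i < m" "j < m" for i j
    by (rule trans[OF Ae[OF that] lap_expand[OF that]])
  let ?g = "\<lambda>f. f ` {..<m}"
  let ?S = "{f\<in>PF. reach (m+1) (?g f)}"
  have L: "(\<Prod>j<m. lab (f j)) = prod lab (?g f)" if f: "f \<in> PF" for f
  proof -
    have "inj_on f {..<m}" unfolding inj_on_def
    proof (intro ballI impI)
      fix x y assume xy: "x \<in> {..<m}" "y \<in> {..<m}" "f x = f y"
      have "s (f x) = x + 1" using PF_props(2)[OF f] xy(1) by simp
      moreover have "s (f y) = y + 1" using PF_props(2)[OF f] xy(2) by simp
      ultimately have "x + 1 = y + 1" using xy(3) by metis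
      then show "x = y" by simp
    qed
    then show ?thesis by (simp add: prod.reindex)
  qed
  have "det A = (\<Sum>f\<in>PF. (\<Prod>j<m. lab (f j)) * det (Mf f :: 'a mat))" by (rule det_expand[OF A Ae'])
  also have "\<dots> = (\<Sum>f\<in>PF. if reach (m+1) (?g f) then (-1) ^ m * prod lab (?g f) else 0)"
  proof (rule sum.cong[OF refl])
    fix f assume f: "f \<in> PF"
    show "(\<Prod>j<m. lab (f j)) * det (Mf f :: 'a mat) = (if reach (m+1) (?g f) then (-1) ^ m * prod lab (?g f) else 0)"
    proof (cases "reach (m+1) (?g f)")
      case True then show ?thesis using det_Mf_reach[OF f True, where 'a='a] L[OF f] by (simp add: mult.commute)
    next
      case False then show ?thesis using det_Mf_noreach[OF f False, where 'a='a] by simp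
    qed
  qed
  also have "\<dots> = (\<Sum>f\<in>?S. (-1) ^ m * prod lab (?g f))"
    by (rule sum.inter_filter[symmetric]) (auto intro!: finite_PiE simp: fin_outs)
  also have "\<dots> = (-1) ^ m * (\<Sum>f\<in>?S. prod lab (?g f))" by (simp add: sum_distrib_left)
  also have "(\<Sum>f\<in>?S. prod lab (?g f)) = (\<Sum>T\<in>{T. arb (m+1) T}. prod lab T)"
  proof (rule sum.reindex_bij_betw)
    show "bij_betw ?g ?S {T. arb (m+1) T}" unfolding bij_betw_def
    proof
      show "inj_on ?g ?S" unfolding inj_on_def
      proof (intro ballI impI)
        fix f1 f2 assume f: "f1 \<in> ?S" "f2 \<in> ?S" "?g f1 = ?g f2"
        show "f1 = f2"
        proof (rule PiE_ext)
          show "f1 \<in> PF" "f2 \<in> PF" using f by auto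
          fix j assume j: "j \<in> {..<m}"
          then have "f1 j \<in> ?g f2" using f(3) by blast
          then obtain j' where j': "j' < m" "f1 j = f2 j'" by auto
          have f12: "f1 \<in> PF" "f2 \<in> PF" using f by auto
          have "s (f1 j) = j + 1" using PF_props(2)[OF f12(1)] j by simp
          moreover have "s (f2 j') = j' + 1" using PF_props(2)[OF f12(2)] j' by simp
          ultimately have "j + 1 = j' + 1" using j'(2) by metis
          then have "j = j'" by simp
          then show "f1 j = f2 j" using j' by simp
        qed
      qed
      show "?g ` ?S = {T. arb (m+1) T}"
      proof
        show "?g ` ?S \<subseteq> {T. arb (m+1) T}"
        proof
          fix T assume "T \<in> ?g ` ?S"
          then obtain f where "f \<in> PF" "reach (m+1) (?g f)" "T = ?g f" by blast
          then show "T \<in> {T. arb (m+1) T}" using PF_func(1) unfolding arb_def by simp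
        qed
        show "{T. arb (m+1) T} \<subseteq> ?g ` ?S"
        proof
          fix T assume "T \<in> {T. arb (m+1) T}"
          then have aT: "arb (m+1) T" by simp
          have fT: "func (m+1) T" and hT: "hasout (m+1) T" using aT unfolding arb_def func_def by auto
          define f where "f = (\<lambda>j\<in>{..<m}. out T (j+1))"
          have jn: "j + 1 \<in> nodes m" "j + 1 \<noteq> m + 1" if "j < m" for j using that unfolding nodes_def by auto
          have TE: "T \<subseteq> E" using hT unfolding hasout_def by auto
          have fPF: "f \<in> PF"
          proof (rule PiE_I)
            fix j assume j: "j \<in> {..<m}"
            then have "out T (j+1) \<in> T" "s (out T (j+1)) = j + 1" using out_in[OF hT jn] by auto
            then show "f j \<in> outs j" unfolding f_def outs_def using j TE by auto
          next
            fix j assume "j \<notin> {..<m}" then show "f j = undefined" unfolding f_def by simp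
          qed
          have "?g f = T"
          proof
            show "?g f \<subseteq> T" unfolding f_def using out_in[OF hT jn] by auto
            show "T \<subseteq> ?g f"
            proof
              fix e assume e: "e \<in> T"
              have "s e \<in> nodes m" "s e \<noteq> m + 1" using e hT sE unfolding hasout_def by auto
              then have "s e - 1 < m" "s e = (s e - 1) + 1" unfolding nodes_def by auto
              moreover have "out T (s e) = e" using out_eq[OF fT e] .
              ultimately have "f (s e - 1) = e" unfolding f_def by simp
              then show "e \<in> ?g f" using \<open>s e - 1 < m\<close> by force
            qed
          qed
          note gT = this
          have fS: "f \<in> ?S" using fPF aT gT unfolding arb_def by simp
          show "T \<in> ?g ` ?S" by (rule image_eqI[where x=f]) (use gT fS in auto)
        qed
      qed
    qed
  qed
  also have "\<dots> = Upsilon m E s t lab (m+1)" by (rule ups_arb[symmetric]) (auto simp: nodes_def)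
  finally show ?thesis .
qed

end


theorem proposition3p7:
  fixes m :: nat
    and A :: "'r::{comm_ring_1,ordered_comm_semiring_strict} mat"
    and b :: "'r vec"
    and E :: "'e set" and s t :: "'e \<Rightarrow> nat" and lab :: "'e \<Rightarrow> 'r"
    and mu :: "'e \<Rightarrow> 'e set"
  assumes "m \<ge> 1"
    and "A \<in> carrier_mat m m"
    and "b \<in> carrier_vec m"
    and "multidigraph m E s t"
    and "\<forall>i\<in>nodes m. \<forall>j\<in>nodes m.
           laplacian m E s t lab i j = bordered m A b $$ (i - 1, j - 1)"
    and "P_graph E s t lab mu"
  shows "(\<forall>i\<in>nodes m. Upsilon m E s t lab i \<noteq> 0 \<longleftrightarrow>
            (\<exists>\<tau>\<in>Lambda m E s t lab mu {i}. \<forall>e\<in>\<tau> \<inter> Eminus E lab.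
               0 < lab e + (\<Sum>e'\<in>mu e. lab e')))
       \<and> (det A \<noteq> 0 \<longleftrightarrow>
            (\<exists>\<tau>\<in>Lambda m E s t lab mu {m+1}. \<forall>e\<in>\<tau> \<inter> Eminus E lab.
               0 < lab e + (\<Sum>e'\<in>mu e. lab e')))"
  proof -
  interpret P: pg m E s t lab mu
    by unfold_locales (use assms(4,6) in auto)
  have p1: "Upsilon m E s t lab i \<noteq> 0 \<longleftrightarrow>
            (\<exists>\<tau>\<in>Lambda m E s t lab mu {i}. \<forall>e\<in>\<tau> \<inter> Eminus E lab.
               0 < lab e + (\<Sum>e'\<in>mu e. lab e'))" if i: "i \<in> nodes m" for i
    using P.part1[OF assms(1) i] P.lambda_iff[OF i] by simp
  have mN: "m + 1 \<in> nodes m" unfolding nodes_def by simp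
  have Ae: "A $$ (i,j) = laplacian m E s t lab (i+1) (j+1)" if "i < m" "j < m" for i j
  proof -
    have "i + 1 \<in> nodes m" "j + 1 \<in> nodes m" using that unfolding nodes_def by auto
    then have "laplacian m E s t lab (i+1) (j+1) = bordered m A b $$ (i, j)" using assms(5) by fastforce
    also have "\<dots> = A $$ (i,j)" unfolding bordered_def using that by simp
    finally show ?thesis by simp
  qed
  have dA: "det A = (-1) ^ m * Upsilon m E s t lab (m+1)" by (rule P.det_ups[OF assms(2) Ae])
  have "det A \<noteq> 0 \<longleftrightarrow> Upsilon m E s t lab (m+1) \<noteq> 0"
  proof
    assume "det A \<noteq> 0" then show "Upsilon m E s t lab (m+1) \<noteq> 0" using dA by auto
  next
    assume nz: "Upsilon m E s t lab (m+1) \<noteq> 0"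
    have "(-1) ^ m * det A = ((-1) ^ m * (-1) ^ m) * Upsilon m E s t lab (m+1)" using dA by (simp add: mult.assoc)
    also have "(-1) ^ m * (-1) ^ m = (1::'r)" by (simp add: power_mult_distrib[symmetric])
    finally show "det A \<noteq> 0" using nz by auto
  qed
  then show ?thesis using p1 p1[OF mN] by blast
qed

end
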